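(* For each $d\ge1$ there exist positive reals $\delta_d,N_d,c_d$ such that for all $n\ge N_d$ and all $\mathbf x\in\mathbb{Z}_n^d\setminus\{\mathbf 0\}$ with $\|\mathbf x\|_2<\delta_d n$, $$\mathbb{E}(\eta_{\mathbf 0}-\eta_{\mathbf x})^2\ge c_d\,\psi_d(n,\|\mathbf x\|_2),$$ where for $r>0$: $\psi_1(n,r)=nr^2$, $\psi_2(n,r)=r^2\log(n/r)$, $\psi_3(n,r)=r$, $\psi_4(n,r)=\log(1+r)$, and $\psi_d(n,r)=1$ for $d\ge5$.
   Context: $\mathbb{Z}_n^d$ is the discrete torus (nearest-neighbour, mod $n$, degree $2d$), identified with $(\mathbb{Z}\cap(-n/2,n/2])^d\subset\mathbb{R}^d$, and $\|\cdot\|_2$ is the Euclidean norm under this identification. $(\eta_{\mathbf x})_{\mathbf x\in\mathbb{Z}_n^d}$ is the centred Gaussian vector with covariance $\mathbb{E}[\eta_{\mathbf x}\eta_{\mathbf y}]=(2d)^{-2}\sum_{\mathbf z}g(\mathbf z,\mathbf x)g(\mathbf z,\mathbf y)$, where $g(\mathbf x,\mathbf y)=n^{-d}\sum_{\mathbf z}g^{\mathbf z}(\mathbf x,\mathbf y)$ and $g^{\mathbf z}(\mathbf x,\mathbf y)$ is the expected number of visits to $\mathbf y$ by simple random walk started at $\mathbf x$ before hitting $\mathbf z$. *)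

theory Defs
  imports "HOL-Analysis.Analysis"
begin

text \<open>Vertices of the discrete torus Z_n^d: functions nat => int with coordinates
  in {0..n-1} for i < d and 0 for i >= d.\<close>
definition torus :: "nat \<Rightarrow> nat \<Rightarrow> (nat \<Rightarrow> int) set" where
  "torus n d = {x. \<forall>i. (i < d \<longrightarrow> 0 \<le> x i \<and> x i < int n) \<and> (d \<le> i \<longrightarrow> x i = 0)}"

definition torus_zero :: "nat \<Rightarrow> int" where
  "torus_zero = (\<lambda>_. 0)"

definition centred_rep :: "nat \<Rightarrow> int \<Rightarrow> int" where
  "centred_rep n a = (if 2 * a > int n then a - int n else a)"

definition torus_norm :: "nat \<Rightarrow> nat \<Rightarrow> (nat \<Rightarrow> int) \<Rightarrow> real" where
  "torus_norm n d x = sqrt (\<Sum>i<d. (real_of_int (centred_rep n (x i)))\<^sup>2)"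

definition tstep :: "nat \<Rightarrow> (nat \<Rightarrow> int) \<Rightarrow> nat \<Rightarrow> int \<Rightarrow> (nat \<Rightarrow> int)" where
  "tstep n x i s = x(i := (x i + s) mod int n)"

text \<open>killed_kernel n d z k x y = probability that simple random walk (degree 2d)
  started at x is at y at time k and has not visited z at times 0..k.\<close>
fun killed_kernel :: "nat \<Rightarrow> nat \<Rightarrow> (nat \<Rightarrow> int) \<Rightarrow> nat \<Rightarrow> (nat \<Rightarrow> int) \<Rightarrow> (nat \<Rightarrow> int) \<Rightarrow> real" where
  "killed_kernel n d z 0 x y = (if x = y \<and> x \<noteq> z then 1 else 0)"
| "killed_kernel n d z (Suc k) x y =
     (if x = z then 0 else
        (\<Sum>i<d. \<Sum>s\<in>{1::int, -1}. killed_kernel n d z k (tstep n x i s) y / (2 * real d)))"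

text \<open>g^z(x,y): expected number of visits to y before hitting z, starting from x.\<close>
definition green_killed :: "nat \<Rightarrow> nat \<Rightarrow> (nat \<Rightarrow> int) \<Rightarrow> (nat \<Rightarrow> int) \<Rightarrow> (nat \<Rightarrow> int) \<Rightarrow> real" where
  "green_killed n d z x y = (\<Sum>k. killed_kernel n d z k x y)"

definition green_avg :: "nat \<Rightarrow> nat \<Rightarrow> (nat \<Rightarrow> int) \<Rightarrow> (nat \<Rightarrow> int) \<Rightarrow> real" where
  "green_avg n d x y = (\<Sum>z\<in>torus n d. green_killed n d z x y) / real n ^ d"

definition eta_cov :: "nat \<Rightarrow> nat \<Rightarrow> (nat \<Rightarrow> int) \<Rightarrow> (nat \<Rightarrow> int) \<Rightarrow> real" where
  "eta_cov n d x y = (\<Sum>z\<in>torus n d. green_avg n d z x * green_avg n d z y) / (2 * real d)\<^sup>2"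

text \<open>E (eta_x - eta_y)^2 for the centred Gaussian vector with covariance eta_cov.\<close>
definition eta_incr_var :: "nat \<Rightarrow> nat \<Rightarrow> (nat \<Rightarrow> int) \<Rightarrow> (nat \<Rightarrow> int) \<Rightarrow> real" where
  "eta_incr_var n d x y = eta_cov n d x x + eta_cov n d y y - 2 * eta_cov n d x y"

definition psi :: "nat \<Rightarrow> real \<Rightarrow> real \<Rightarrow> real" where
  "psi d n r = (if d = 1 then n * r\<^sup>2
               else if d = 2 then r\<^sup>2 * ln (n / r)
               else if d = 3 then r
               else if d = 4 then ln (1 + r)
               else 1)"

end

theory Submission
  imports Defs
begin


definition extz :: "nat \<Rightarrow> (nat \<Rightarrow> int) \<Rightarrow> (nat \<Rightarrow> int)" where
  "extz d g = (\<lambda>i. if i < d then g i else 0)"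

lemma torus_image: "torus n d = extz d ` (PiE {..<d} (\<lambda>_. {0..<int n}))"
proof
  show "torus n d \<subseteq> extz d ` (PiE {..<d} (\<lambda>_. {0..<int n}))"
  proof
    fix x assume x: "x \<in> torus n d"
    have "restrict x {..<d} \<in> PiE {..<d} (\<lambda>_. {0..<int n})" using x by (auto simp: torus_def)
    moreover have "x = extz d (restrict x {..<d})" using x by (auto simp: torus_def extz_def fun_eq_iff)
    ultimately show "x \<in> extz d ` (PiE {..<d} (\<lambda>_. {0..<int n}))" by blast
  qed
  show "extz d ` (PiE {..<d} (\<lambda>_. {0..<int n})) \<subseteq> torus n d"
    by (auto simp: torus_def extz_def PiE_def Pi_def)
qed

lemma inj_extz: "inj_on (extz d) (PiE {..<d} (\<lambda>_. {0..<int n}))"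
proof (rule inj_onI)
  fix f g assume f: "f \<in> PiE {..<d} (\<lambda>_. {0..<int n})" and g: "g \<in> PiE {..<d} (\<lambda>_. {0..<int n})"
    and e: "extz d f = extz d g"
  show "f = g"
  proof (rule PiE_ext[OF f g])
    fix i assume "i \<in> {..<d}" thus "f i = g i" using fun_cong[OF e, of i] by (simp add: extz_def)
  qed
qed

lemma finite_torus: "finite (torus n d)"
  by (simp add: torus_image finite_PiE)

lemma card_torus: "card (torus n d) = n ^ d"
  by (simp add: torus_image card_image[OF inj_extz] card_PiE)

lemma zero_torus: "torus_zero \<in> torus n d" if "n \<ge> 1"
  using that by (auto simp: torus_def torus_zero_def)

lemma tstep_torus:
  assumes "x \<in> torus n d" "i < d" "n \<ge> 1"
  shows "tstep n x i s \<in> torus n d"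
  using assms by (auto simp: torus_def tstep_def)

lemma tstep_inv:
  assumes "x \<in> torus n d" "i < d" "n \<ge> 1"
  shows "tstep n (tstep n x i s) i (-s) = x"
proof -
  have "((x i + s) mod int n + - s) mod int n = x i"
  proof -
    have "((x i + s) mod int n + - s) mod int n = (x i + s + - s) mod int n"
      by (metis mod_add_left_eq)
    also have "\<dots> = x i" using assms by (auto simp: torus_def)
    finally show ?thesis .
  qed
  thus ?thesis by (auto simp: tstep_def fun_eq_iff)
qed

lemma sum_tstep:
  assumes "i < d" "n \<ge> 1"
  shows "(\<Sum>w\<in>torus n d. f (tstep n w i s)) = (\<Sum>w\<in>torus n d. f w)"
proof (rule sum.reindex_bij_witness[where i="\<lambda>w. tstep n w i (-s)" and j="\<lambda>w. tstep n w i s"])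
  fix a assume "a \<in> torus n d"
  thus "tstep n (tstep n a i s) i (- s) = a" using tstep_inv assms by blast
  show "tstep n a i s \<in> torus n d" using tstep_torus assms \<open>a \<in> torus n d\<close> by blast
  show "f (tstep n a i s) = f (tstep n a i s)" by simp
next
  fix a assume "a \<in> torus n d"
  thus "tstep n (tstep n a i (-s)) i s = a" using tstep_inv[of a n d i "-s"] assms by simp
  show "tstep n a i (-s) \<in> torus n d" using tstep_torus assms \<open>a \<in> torus n d\<close> by blast
qed


lemma sum_pm: "sum f {1::int,-1} = f 1 + f (-1)" by simp

lemma kk_nonneg: "killed_kernel n d z k x y \<ge> 0"
  by (induction k arbitrary: x) (auto intro!: sum_nonneg divide_nonneg_nonneg)

fun surv :: "nat \<Rightarrow> nat \<Rightarrow> (nat\<Rightarrow>int) \<Rightarrow> nat \<Rightarrow> (nat\<Rightarrow>int) \<Rightarrow> real" where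
  "surv n d z 0 x = (if x = z then 0 else 1)"
| "surv n d z (Suc k) x = (if x = z then 0 else
      (\<Sum>i<d. \<Sum>s\<in>{1::int,-1}. surv n d z k (tstep n x i s) / (2 * real d)))"

lemma surv_nonneg: "surv n d z k x \<ge> 0"
  by (induction k arbitrary: x) (auto intro!: sum_nonneg divide_nonneg_nonneg)

lemma surv_le1: "surv n d z k x \<le> 1"
proof (induction k arbitrary: x)
  case 0 thus ?case by simp
next
  case (Suc k)
  show ?case
  proof (cases "x = z")
    case False
    have "(\<Sum>i<d. \<Sum>s\<in>{1::int,-1}. surv n d z k (tstep n x i s) / (2 * real d))
        \<le> (\<Sum>i<d. \<Sum>s\<in>{1::int,-1}. 1 / (2 * real d))"
      by (intro sum_mono divide_right_mono) (auto simp: Suc.IH)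
    also have "\<dots> \<le> 1" by (cases "d = 0") (auto simp: sum_pm)
    finally show ?thesis using False by simp
  qed simp
qed

lemma kk_le_surv: "killed_kernel n d z k x y \<le> surv n d z k x"
proof (induction k arbitrary: x)
  case 0 thus ?case by auto
next
  case (Suc k) thus ?case
    by (auto intro!: sum_mono add_mono divide_right_mono)
qed

lemma surv_z: "surv n d z k z = 0" by (cases k) auto

lemma surv_mult:
  assumes "\<forall>v\<in>torus n d. surv n d z a v \<le> c" "c \<ge> 0" "x \<in> torus n d" "n \<ge> 1"
  shows "surv n d z (b + a) x \<le> c * surv n d z b x"
  using assms(3)
proof (induction b arbitrary: x)
  case 0 thus ?case using assms(1) surv_z by (cases "x = z") auto
next
  case (Suc b)
  show ?case
  proof (cases "x = z")
    case False
    have "surv n d z (Suc b + a) x =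
      (\<Sum>i<d. \<Sum>s\<in>{1::int,-1}. surv n d z (b + a) (tstep n x i s) / (2 * real d))"
      using False by simp
    also have "\<dots> \<le> (\<Sum>i<d. \<Sum>s\<in>{1::int,-1}. c * surv n d z b (tstep n x i s) / (2 * real d))"
      by (intro sum_mono divide_right_mono) (auto intro!: Suc.IH tstep_torus Suc.prems assms(4))
    also have "\<dots> = c * surv n d z (Suc b) x"
      using False by (simp add: sum_distrib_left algebra_simps)
    finally show ?thesis .
  qed (simp add: surv_z)
qed

definition tdist :: "nat \<Rightarrow> nat \<Rightarrow> (nat\<Rightarrow>int) \<Rightarrow> (nat\<Rightarrow>int) \<Rightarrow> nat" where
  "tdist n d z x = (\<Sum>i<d. nat ((x i - z i) mod int n))"

lemma tdist_bound:
  assumes "n \<ge> 1" shows "tdist n d z x \<le> d * n"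
proof -
  have "tdist n d z x \<le> (\<Sum>i<d. n)" unfolding tdist_def
  proof (rule sum_mono)
    fix i have "(x i - z i) mod int n < int n" using assms by simp
    thus "nat ((x i - z i) mod int n) \<le> n" by linarith
  qed
  thus ?thesis by simp
qed

lemma surv_hit:
  assumes "z \<in> torus n d" "n \<ge> 1" "d \<ge> 1"
  shows "x \<in> torus n d \<Longrightarrow> tdist n d z x \<le> k \<Longrightarrow> surv n d z k x \<le> 1 - (1 / (2 * real d)) ^ k"
proof (induction k arbitrary: x)
  case 0
  have "x = z"
  proof
    fix i show "x i = z i"
    proof (cases "i < d")
      case True
      have "nat ((x i - z i) mod int n) = 0" using 0 True unfolding tdist_def
        by (simp add: sum_nonneg_eq_0_iff)
      hence "(x i - z i) mod int n = 0" using assms(2) by (simp add: nat_eq_iff)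
      hence "x i mod int n = z i mod int n" by (simp add: mod_eq_dvd_iff dvd_eq_mod_eq_0)
      thus ?thesis using True 0(1) assms(1) by (auto simp: torus_def)
    next
      case False thus ?thesis using 0(1) assms(1) by (auto simp: torus_def)
    qed
  qed
  thus ?case by simp
next
  case (Suc k)
  show ?case
  proof (cases "x = z")
    case True
    have "(1 / (2 * real d)) ^ Suc k \<le> 1" using assms(3) by (intro power_le_one) auto
    moreover have "surv n d z (Suc k) x = 0" using True surv_z by blast
    ultimately show ?thesis by linarith
  next
    case False
    then obtain i where i: "x i \<noteq> z i" by auto
    have id: "i < d"
    proof (rule ccontr)
      assume "\<not> i < d" thus False using i Suc.prems(1) assms(1) by (auto simp: torus_def)
    qed
    have xi: "0 \<le> x i" "x i < int n" "0 \<le> z i" "z i < int n"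
      using id Suc.prems(1) assms(1) by (auto simp: torus_def)
    define x' where "x' = tstep n x i (-1)"
    have x'T: "x' \<in> torus n d" unfolding x'_def using tstep_torus Suc.prems(1) id assms by blast
    have m: "(x i - z i) mod int n \<noteq> 0"
    proof
      assume "(x i - z i) mod int n = 0"
      hence "x i mod int n = z i mod int n" by (simp add: mod_eq_dvd_iff dvd_eq_mod_eq_0)
      thus False using xi i by simp
    qed
    have m2: "(x' i - z i) mod int n = (x i - z i) mod int n - 1"
    proof -
      have "(x' i - z i) mod int n = ((x i - 1) mod int n - z i) mod int n" by (simp add: x'_def tstep_def)
      also have "\<dots> = (x i - z i - 1) mod int n" using mod_diff_left_eq[of "x i - 1" "int n" "z i"] by (simp add: algebra_simps)
      also have "\<dots> = (x i - z i) mod int n - 1"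
      proof -
        have a: "0 \<le> (x i - z i) mod int n" "(x i - z i) mod int n < int n" using assms(2) by auto
        have "(x i - z i - 1) mod int n = ((x i - z i) mod int n - 1) mod int n"
          by (simp add: mod_diff_left_eq)
        also have "\<dots> = (x i - z i) mod int n - 1" using a m by (intro mod_pos_pos_trivial) auto
        finally show ?thesis .
      qed
      finally show ?thesis .
    qed
    have dd: "tdist n d z x' + 1 = tdist n d z x"
    proof -
      have "tdist n d z x = nat ((x i - z i) mod int n) + (\<Sum>j\<in>{..<d}-{i}. nat ((x j - z j) mod int n))"
        unfolding tdist_def using id by (simp add: sum.remove)
      moreover have "tdist n d z x' = nat ((x' i - z i) mod int n) + (\<Sum>j\<in>{..<d}-{i}. nat ((x' j - z j) mod int n))"
        unfolding tdist_def using id by (simp add: sum.remove)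
      moreover have "(\<Sum>j\<in>{..<d}-{i}. nat ((x' j - z j) mod int n)) = (\<Sum>j\<in>{..<d}-{i}. nat ((x j - z j) mod int n))"
        by (rule sum.cong) (auto simp: x'_def tstep_def)
      moreover have "0 \<le> (x i - z i) mod int n" using assms(2) by auto
      ultimately show ?thesis using m2 m by simp
    qed
    have IHx': "surv n d z k x' \<le> 1 - (1 / (2 * real d)) ^ k"
      using Suc.IH[OF x'T] dd Suc.prems(2) by simp
    let ?f = "\<lambda>j t. surv n d z k (tstep n x j t) / (2 * real d)"
    have "(\<Sum>j<d. \<Sum>t\<in>{1::int,-1}. ?f j t) = ?f i (-1) + (\<Sum>(j,t)\<in>({..<d}\<times>{1::int,-1}) - {(i,-1)}. ?f j t)"
    proof -
      have "(\<Sum>j<d. \<Sum>t\<in>{1::int,-1}. ?f j t) = (\<Sum>(j,t)\<in>{..<d}\<times>{1::int,-1}. ?f j t)"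
        by (rule sum.cartesian_product)
      also have "\<dots> = ?f i (-1) + (\<Sum>(j,t)\<in>({..<d}\<times>{1::int,-1}) - {(i,-1)}. ?f j t)"
        using id by (subst sum.remove[of _ "(i,-1)"]) auto
      finally show ?thesis .
    qed
    also have "\<dots> \<le> (1 - (1 / (2 * real d)) ^ k) / (2 * real d) + (\<Sum>(j,t)\<in>({..<d}\<times>{1::int,-1}) - {(i,-1)}. 1 / (2 * real d))"
      using IHx' x'_def assms(3)
      by (intro add_mono sum_mono) (auto intro!: divide_right_mono surv_le1)
    also have "\<dots> = (1 - (1 / (2 * real d)) ^ k) / (2 * real d) + (2 * real d - 1) / (2 * real d)"
    proof -
      have "card ({..<d}\<times>{1::int,-1} - {(i,-1)}) = 2 * d - 1" using id by (simp add: card_cartesian_product)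
      moreover have "2 * d - 1 \<ge> (1::nat)" using assms by simp
      ultimately show ?thesis by (simp add: of_nat_diff)
    qed
    also have "\<dots> = 1 - (1 / (2 * real d)) ^ Suc k" using assms(3) by (simp add: field_simps)
    finally show ?thesis using False by simp
  qed
qed


lemma surv_geom:
  assumes "z \<in> torus n d" "n \<ge> 1" "d \<ge> 1"
  defines "q \<equiv> 1 - (1 / (2 * real d)) ^ (d * n)"
  shows "\<forall>v\<in>torus n d. surv n d z (k * (d * n)) v \<le> q ^ k"
proof (induction k)
  case 0 thus ?case using surv_le1 by simp
next
  case (Suc k)
  have q0: "q \<ge> 0" unfolding q_def using assms(3)
    by (simp add: power_le_one)
  have hit: "\<forall>v\<in>torus n d. surv n d z (d * n) v \<le> q"
    unfolding q_def using surv_hit[OF assms(1-3)] tdist_bound[OF assms(2)] by blast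
  show ?case
  proof
    fix v assume v: "v \<in> torus n d"
    have "surv n d z (Suc k * (d * n)) v = surv n d z (k * (d * n) + d * n) v" by (simp add: add.commute)
    also have "\<dots> \<le> q * surv n d z (k * (d * n)) v" by (rule surv_mult[OF hit q0 v assms(2)])
    also have "\<dots> \<le> q * q ^ k" using Suc v q0 by (intro mult_left_mono) auto
    finally show "surv n d z (Suc k * (d * n)) v \<le> q ^ Suc k" by simp
  qed
qed

lemma kk_summable:
  assumes "z \<in> torus n d" "x \<in> torus n d" "n \<ge> 1" "d \<ge> 1"
  shows "summable (\<lambda>k. killed_kernel n d z k x y)"
proof -
  define m where "m = d * n"
  define q where "q = 1 - (1 / (2 * real d)) ^ (d * n)"
  have m0: "m > 0" using assms by (simp add: m_def)
  have eps: "0 < (1 / (2 * real d)) ^ (d * n)" "(1 / (2 * real d)) ^ (d * n) < 1"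
    using assms(4) m0 unfolding m_def by (auto simp: power_less_one_iff)
  have q01: "0 < q" "q < 1" using eps by (auto simp: q_def)
  define \<rho> where "\<rho> = root m q"
  have \<rho>: "0 < \<rho>" "\<rho> < 1" "\<rho> ^ m = q" using q01 m0 by (auto simp: \<rho>_def real_root_pow_pos2)
  have bound: "killed_kernel n d z k x y \<le> \<rho> ^ k / q" for k
  proof -
    have "killed_kernel n d z k x y \<le> surv n d z k x" by (rule kk_le_surv)
    also have "surv n d z k x = surv n d z (k mod m + (k div m) * m) x" by simp
    also have "\<dots> \<le> q ^ (k div m) * surv n d z (k mod m) x"
      using surv_geom[OF assms(1,3,4), of "k div m"] q01
      by (intro surv_mult[OF _ _ assms(2,3)]) (auto simp: m_def q_def)
    also have "\<dots> \<le> q ^ (k div m)" using surv_le1 q01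
      by (metis mult.right_neutral mult_left_mono less_imp_le zero_le_power)
    also have "\<dots> \<le> \<rho> ^ k / q"
    proof -
      have "\<rho> ^ k = \<rho> ^ ((k div m) * m) * \<rho> ^ (k mod m)"
        by (metis div_mult_mod_eq power_add)
      also have "\<rho> ^ ((k div m) * m) = q ^ (k div m)" using \<rho>(3) by (metis mult.commute power_mult)
      finally have e: "\<rho> ^ k = q ^ (k div m) * \<rho> ^ (k mod m)" .
      have "\<rho> ^ (k mod m) \<ge> \<rho> ^ m" using \<rho> m0 by (intro power_decreasing) auto
      hence "\<rho> ^ (k mod m) \<ge> q" using \<rho>(3) by simp
      hence "q ^ (k div m) * q \<le> \<rho> ^ k" unfolding e using q01 by (intro mult_left_mono) auto
      thus ?thesis using q01 by (simp add: field_simps)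
    qed
    finally show ?thesis .
  qed
  have "summable (\<lambda>k. \<rho> ^ k / q)" using \<rho> by (intro summable_divide summable_geometric) auto
  thus ?thesis by (rule summable_comparison_test'[where N=0]) (use bound kk_nonneg in auto)
qed

lemma green_eq:
  assumes "z \<in> torus n d" "x \<in> torus n d" "n \<ge> 1" "d \<ge> 1"
  shows "green_killed n d z x y = (if x = y \<and> x \<noteq> z then 1 else 0) +
     (if x = z then 0 else (\<Sum>i<d. \<Sum>s\<in>{1::int,-1}. green_killed n d z (tstep n x i s) y / (2 * real d)))"
proof -
  have S: "summable (\<lambda>k. killed_kernel n d z k x y)" by (rule kk_summable[OF assms])
  have Sn: "summable (\<lambda>k. killed_kernel n d z k (tstep n x i s) y)" if "i < d" for i s
    by (rule kk_summable[OF assms(1) tstep_torus[OF assms(2) that assms(3)] assms(3,4)])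
  have "green_killed n d z x y = killed_kernel n d z 0 x y + (\<Sum>k. killed_kernel n d z (Suc k) x y)"
    unfolding green_killed_def using suminf_split_head[OF S] by simp
  also have "(\<Sum>k. killed_kernel n d z (Suc k) x y) =
     (if x = z then 0 else (\<Sum>i<d. \<Sum>s\<in>{1::int,-1}. green_killed n d z (tstep n x i s) y / (2 * real d)))"
  proof (cases "x = z")
    case True thus ?thesis by simp
  next
    case False
    have "(\<Sum>k. killed_kernel n d z (Suc k) x y) =
      (\<Sum>k. \<Sum>i<d. \<Sum>s\<in>{1::int,-1}. killed_kernel n d z k (tstep n x i s) y / (2 * real d))"
      using False by simp
    also have "\<dots> = (\<Sum>i<d. \<Sum>k. \<Sum>s\<in>{1::int,-1}. killed_kernel n d z k (tstep n x i s) y / (2 * real d))"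
      by (rule suminf_sum) (auto intro!: summable_add summable_divide Sn)
    also have "\<dots> = (\<Sum>i<d. \<Sum>s\<in>{1::int,-1}. \<Sum>k. killed_kernel n d z k (tstep n x i s) y / (2 * real d))"
      by (intro sum.cong refl suminf_sum) (auto intro!: summable_divide Sn)
    also have "\<dots> = (\<Sum>i<d. \<Sum>s\<in>{1::int,-1}. green_killed n d z (tstep n x i s) y / (2 * real d))"
      unfolding green_killed_def
      by (intro sum.cong refl) (auto simp: suminf_divide Sn)
    finally show ?thesis using False by simp
  qed
  finally show ?thesis by simp
qed

lemma green_z: "green_killed n d z z y = 0"
proof -
  have "\<And>k. killed_kernel n d z k z y = 0" by (case_tac k) auto
  thus ?thesis unfolding green_killed_def by simp
qed


definition Ltor :: "nat \<Rightarrow> nat \<Rightarrow> ((nat\<Rightarrow>int) \<Rightarrow> real) \<Rightarrow> (nat\<Rightarrow>int) \<Rightarrow> real" where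
  "Ltor n d f w = f w - (\<Sum>i<d. \<Sum>s\<in>{1::int,-1}. f (tstep n w i s)) / (2 * real d)"

lemma sum_Ltor:
  assumes "n \<ge> 1" "d \<ge> 1"
  shows "(\<Sum>w\<in>torus n d. Ltor n d f w) = 0"
proof -
  have "(\<Sum>w\<in>torus n d. \<Sum>i<d. \<Sum>s\<in>{1::int,-1}. f (tstep n w i s))
      = (\<Sum>i<d. \<Sum>s\<in>{1::int,-1}. \<Sum>w\<in>torus n d. f (tstep n w i s))"
    by (simp add: sum.swap[of _ "torus n d"])
  also have "\<dots> = (\<Sum>i<d. \<Sum>s\<in>{1::int,-1}. \<Sum>w\<in>torus n d. f w)"
    using assms by (simp add: sum_tstep)
  also have "\<dots> = 2 * real d * (\<Sum>w\<in>torus n d. f w)" by simp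
  finally have e: "(\<Sum>w\<in>torus n d. \<Sum>i<d. \<Sum>s\<in>{1::int,-1}. f (tstep n w i s)) = 2 * real d * (\<Sum>w\<in>torus n d. f w)" .
  show ?thesis unfolding Ltor_def sum_subtractf sum_divide_distrib[symmetric] e
    using assms by simp
qed

lemma Ltor_green:
  assumes "z \<in> torus n d" "x \<in> torus n d" "n \<ge> 1" "d \<ge> 1"
  shows "Ltor n d (\<lambda>v. green_killed n d z v y) x =
    (if x = z then - ((\<Sum>i<d. \<Sum>s\<in>{1::int,-1}. green_killed n d z (tstep n x i s) y) / (2 * real d))
     else (if x = y then 1 else 0))"
proof (cases "x = z")
  case True thus ?thesis by (simp add: Ltor_def green_z)
next
  case False
  show ?thesis using green_eq[OF assms, of y] False
    by (simp add: Ltor_def sum_divide_distrib add_divide_distrib)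
qed

lemma conservation:
  assumes "z \<in> torus n d" "y \<in> torus n d" "n \<ge> 1" "d \<ge> 1"
  shows "(\<Sum>i<d. \<Sum>s\<in>{1::int,-1}. green_killed n d z (tstep n z i s) y) / (2 * real d) = (if y = z then 0 else 1)"
proof -
  let ?f = "\<lambda>v. green_killed n d z v y"
  let ?A = "(\<Sum>i<d. \<Sum>s\<in>{1::int,-1}. green_killed n d z (tstep n z i s) y) / (2 * real d)"
  have "0 = (\<Sum>w\<in>torus n d. Ltor n d ?f w)" using sum_Ltor[OF assms(3,4)] by simp
  also have "\<dots> = Ltor n d ?f z + (\<Sum>w\<in>torus n d - {z}. Ltor n d ?f w)"
    using assms(1) finite_torus by (simp add: sum.remove)
  also have "(\<Sum>w\<in>torus n d - {z}. Ltor n d ?f w) = (\<Sum>w\<in>torus n d - {z}. if w = y then 1 else 0)"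
    using assms by (intro sum.cong refl) (auto simp: Ltor_green)
  also have "\<dots> = (if y = z then 0 else 1)"
    using assms(2) finite_torus by (simp add: sum.delta)
  also have "Ltor n d ?f z = - ?A" using Ltor_green[OF assms(1,1,3,4)] by simp
  finally show ?thesis by simp
qed

lemma Ltor_sum: "Ltor n d (\<lambda>v. \<Sum>z\<in>Z. h z v) w = (\<Sum>z\<in>Z. Ltor n d (h z) w)"
  unfolding Ltor_def by (simp add: sum_subtractf sum_divide_distrib sum.swap[of _ Z])

lemma Ltor_div: "Ltor n d (\<lambda>v. f v / c) w = Ltor n d f w / c"
  unfolding Ltor_def by (simp add: sum_divide_distrib[symmetric] diff_divide_distrib)

lemma Ltor_diff: "Ltor n d (\<lambda>v. f v - g v) w = Ltor n d f w - Ltor n d g w"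
  unfolding Ltor_def by (simp add: sum_subtractf diff_divide_distrib)

lemma Ltor_green_avg:
  assumes "w \<in> torus n d" "y \<in> torus n d" "n \<ge> 1" "d \<ge> 1"
  shows "Ltor n d (\<lambda>v. green_avg n d v y) w = (if w = y then 1 else 0) - 1 / real n ^ d"
proof -
  have "Ltor n d (\<lambda>v. green_avg n d v y) w = (\<Sum>z\<in>torus n d. Ltor n d (\<lambda>v. green_killed n d z v y) w) / real n ^ d"
    unfolding green_avg_def Ltor_div Ltor_sum by simp
  also have "(\<Sum>z\<in>torus n d. Ltor n d (\<lambda>v. green_killed n d z v y) w)
     = Ltor n d (\<lambda>v. green_killed n d w v y) w + (\<Sum>z\<in>torus n d - {w}. Ltor n d (\<lambda>v. green_killed n d z v y) w)"
    using assms(1) finite_torus by (simp add: sum.remove)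
  also have "Ltor n d (\<lambda>v. green_killed n d w v y) w = - (if y = w then 0 else 1)"
    using Ltor_green[OF assms(1,1,3,4), of y] conservation[OF assms(1,2,3,4)] by simp
  also have "(\<Sum>z\<in>torus n d - {w}. Ltor n d (\<lambda>v. green_killed n d z v y) w)
      = (\<Sum>z\<in>torus n d - {w}. if w = y then 1 else 0)"
    using assms by (intro sum.cong refl) (auto simp: Ltor_green)
  also have "\<dots> = (if w = y then real (n ^ d) - 1 else 0)"
  proof -
    have "n ^ d \<ge> 1" using assms(3) by simp
    thus ?thesis using assms(1) finite_torus card_torus[of n d] by (simp add: card_Diff_singleton of_nat_diff)
  qed
  finally show ?thesis using assms(3) by (auto simp: field_simps)
qed

definition uvec :: "nat \<Rightarrow> nat \<Rightarrow> (nat\<Rightarrow>int) \<Rightarrow> (nat\<Rightarrow>int) \<Rightarrow> real" where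
  "uvec n d x v = green_avg n d v torus_zero - green_avg n d v x"

lemma Ltor_u:
  assumes "w \<in> torus n d" "x \<in> torus n d" "n \<ge> 1" "d \<ge> 1"
  shows "Ltor n d (uvec n d x) w = (if w = torus_zero then 1 else 0) - (if w = x then 1 else 0)"
  unfolding uvec_def Ltor_diff using Ltor_green_avg[OF assms(1) zero_torus[OF assms(3)] assms(3,4)]
    Ltor_green_avg[OF assms(1,2,3,4)] by simp

lemma var_eq:
  "eta_incr_var n d torus_zero x = (\<Sum>z\<in>torus n d. (uvec n d x z)^2) / (2 * real d)^2"
proof -
  have "(\<Sum>z\<in>torus n d. (uvec n d x z)^2) =
    (\<Sum>z\<in>torus n d. green_avg n d z torus_zero * green_avg n d z torus_zero) +
    (\<Sum>z\<in>torus n d. green_avg n d z x * green_avg n d z x) -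
    2 * (\<Sum>z\<in>torus n d. green_avg n d z torus_zero * green_avg n d z x)"
    unfolding uvec_def by (simp add: power2_eq_square algebra_simps sum.distrib sum_subtractf sum_distrib_left)
  thus ?thesis unfolding eta_incr_var_def eta_cov_def by (simp add: diff_divide_distrib add_divide_distrib)
qed

lemma duality:
  assumes "n \<ge> 1" "d \<ge> 1"
  shows "(\<Sum>w\<in>torus n d. u w * Ltor n d \<phi> w) = (\<Sum>w\<in>torus n d. Ltor n d u w * \<phi> w)"
proof -
  have key: "(\<Sum>w\<in>torus n d. u w * \<phi> (tstep n w i s)) = (\<Sum>w\<in>torus n d. u (tstep n w i (-s)) * \<phi> w)"
    if "i < d" for i s
  proof -
    have "(\<Sum>w\<in>torus n d. u (tstep n w i (-s)) * \<phi> w) = (\<Sum>w\<in>torus n d. u (tstep n (tstep n w i s) i (-s)) * \<phi> (tstep n w i s))"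
      using sum_tstep[OF that assms(1), of "\<lambda>w. u (tstep n w i (-s)) * \<phi> w" s] by simp
    also have "\<dots> = (\<Sum>w\<in>torus n d. u w * \<phi> (tstep n w i s))"
      using tstep_inv that assms by (intro sum.cong refl) auto
    finally show ?thesis by simp
  qed
  have "(\<Sum>w\<in>torus n d. u w * (\<Sum>i<d. \<Sum>s\<in>{1::int,-1}. \<phi> (tstep n w i s)))
      = (\<Sum>i<d. \<Sum>s\<in>{1::int,-1}. \<Sum>w\<in>torus n d. u w * \<phi> (tstep n w i s))"
    by (simp add: sum_distrib_left sum.swap[of _ "torus n d"] distrib_left)
  also have "\<dots> = (\<Sum>i<d. \<Sum>s\<in>{1::int,-1}. \<Sum>w\<in>torus n d. u (tstep n w i (-s)) * \<phi> w)"
    by (intro sum.cong refl key) auto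
  also have "\<dots> = (\<Sum>i<d. \<Sum>s\<in>{1::int,-1}. \<Sum>w\<in>torus n d. u (tstep n w i s) * \<phi> w)"
    by (simp add: sum_pm add.commute)
  also have "\<dots> = (\<Sum>w\<in>torus n d. (\<Sum>i<d. \<Sum>s\<in>{1::int,-1}. u (tstep n w i s)) * \<phi> w)"
    by (simp add: sum_distrib_right sum.swap[of _ "torus n d"] distrib_right)
  finally have e: "(\<Sum>w\<in>torus n d. u w * (\<Sum>i<d. \<Sum>s\<in>{1::int,-1}. \<phi> (tstep n w i s)))
     = (\<Sum>w\<in>torus n d. (\<Sum>i<d. \<Sum>s\<in>{1::int,-1}. u (tstep n w i s)) * \<phi> w)" .
  have p1: "u w * Ltor n d \<phi> w = u w * \<phi> w - (u w * (\<Sum>i<d. \<Sum>s\<in>{1::int,-1}. \<phi> (tstep n w i s))) / (2 * real d)" for w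
    unfolding Ltor_def by (simp add: right_diff_distrib)
  have p2: "Ltor n d u w * \<phi> w = u w * \<phi> w - ((\<Sum>i<d. \<Sum>s\<in>{1::int,-1}. u (tstep n w i s)) * \<phi> w) / (2 * real d)" for w
    unfolding Ltor_def by (simp add: left_diff_distrib)
  show ?thesis
    unfolding p1 p2 sum_subtractf sum_divide_distrib[symmetric] e ..
qed

theorem main_ineq:
  assumes "n \<ge> 1" "d \<ge> 1" "x \<in> torus n d" "x \<noteq> torus_zero"
  shows "(\<phi> torus_zero - \<phi> x)^2 \<le> (2 * real d)^2 * eta_incr_var n d torus_zero x * (\<Sum>w\<in>torus n d. (Ltor n d \<phi> w)^2)"
proof -
  have "(\<Sum>w\<in>torus n d. uvec n d x w * Ltor n d \<phi> w) = (\<Sum>w\<in>torus n d. Ltor n d (uvec n d x) w * \<phi> w)"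
    by (rule duality[OF assms(1,2)])
  also have "\<dots> = (\<Sum>w\<in>torus n d. (if w = torus_zero then \<phi> w else 0) - (if w = x then \<phi> w else 0))"
    using assms by (intro sum.cong refl) (auto simp: Ltor_u)
  also have "\<dots> = \<phi> torus_zero - \<phi> x"
    using assms zero_torus[OF assms(1)] finite_torus by (simp add: sum_subtractf sum.delta)
  finally have e: "\<phi> torus_zero - \<phi> x = (\<Sum>w\<in>torus n d. uvec n d x w * Ltor n d \<phi> w)" by simp
  have "(\<phi> torus_zero - \<phi> x)^2 \<le> (\<Sum>w\<in>torus n d. (uvec n d x w)^2) * (\<Sum>w\<in>torus n d. (Ltor n d \<phi> w)^2)"
    unfolding e by (rule Cauchy_Schwarz_ineq_sum)
  also have "(\<Sum>w\<in>torus n d. (uvec n d x w)^2) = (2 * real d)^2 * eta_incr_var n d torus_zero x"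
    using assms(2) by (simp add: var_eq)
  finally show ?thesis by (simp add: mult.assoc)
qed


definition cvec :: "nat \<Rightarrow> (nat\<Rightarrow>int) \<Rightarrow> (nat\<Rightarrow>int)" where
  "cvec n w = (\<lambda>i. centred_rep n (w i))"

definition Nsq :: "nat \<Rightarrow> (nat\<Rightarrow>int) \<Rightarrow> real" where
  "Nsq d v = (\<Sum>i<d. (real_of_int (v i))^2)"

lemma norm_Nsq: "torus_norm n d w = sqrt (Nsq d (cvec n w))"
  by (simp add: torus_norm_def Nsq_def cvec_def)

lemma Nsq_nonneg: "Nsq d v \<ge> 0" unfolding Nsq_def by (auto intro: sum_nonneg)

lemma comp_le_Nsq: "i < d \<Longrightarrow> (real_of_int (v i))^2 \<le> Nsq d v"
  unfolding Nsq_def by (rule member_le_sum) auto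

lemma comp_le_sqrt: "i < d \<Longrightarrow> \<bar>real_of_int (v i)\<bar> \<le> sqrt (Nsq d v)"
  using comp_le_Nsq real_sqrt_le_mono[OF comp_le_Nsq[of i d v]] by simp

lemma Nsq_upd: "i < d \<Longrightarrow> Nsq d (v(i := t)) = Nsq d v - (real_of_int (v i))^2 + (real_of_int t)^2"
proof -
  assume i: "i < d"
  have "Nsq d (v(i := t)) = (real_of_int t)^2 + (\<Sum>j\<in>{..<d}-{i}. (real_of_int (v j))^2)"
    unfolding Nsq_def using i by (simp add: sum.remove)
  moreover have "Nsq d v = (real_of_int (v i))^2 + (\<Sum>j\<in>{..<d}-{i}. (real_of_int (v j))^2)"
    unfolding Nsq_def using i by (simp add: sum.remove)
  ultimately show ?thesis by simp
qed

lemma centred_window: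
  assumes "0 \<le> a" "a < int n"
  shows "- int n < 2 * centred_rep n a" "2 * centred_rep n a \<le> int n" "centred_rep n a mod int n = a"
  using assms by (auto simp: centred_rep_def mod_pos_pos_trivial)

lemma window_unique:
  fixes p q :: int
  assumes "- int n < 2 * p" "2 * p \<le> int n" "- int n < 2 * q" "2 * q \<le> int n" "p mod int n = q mod int n"
  shows "p = q"
proof -
  have "int n dvd (p - q)" using assms(5) by (simp add: mod_eq_dvd_iff)
  then obtain k where k: "p - q = int n * k" by (auto elim: dvdE)
  have "\<bar>p - q\<bar> < int n" using assms(1-4) by linarith
  hence "\<bar>int n * k\<bar> < int n" using k by simp
  hence "k = 0"
    by (metis abs_mult abs_of_nat mult.right_neutral mult_less_cancel_left_pos not_less zero_less_abs_iff
        linorder_neqE_linordered_idom mult_eq_0_iff abs_ge_zero int_one_le_iff_zero_less less_le_trans of_nat_0_less_iff zero_less_one_class.zero_le_one)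
  thus ?thesis using k by simp
qed

lemma pm_cases: "s \<in> {1::int, -1} \<Longrightarrow> s = 1 \<or> s = -1" by auto

lemma nbr_coord:
  assumes "w \<in> torus n d" "i < d" "n \<ge> 1" "s = 1 \<or> s = -1"
  defines "c \<equiv> centred_rep n (w i)"
  defines "c' \<equiv> centred_rep n (tstep n w i s i)"
  shows "- int n < 2 * (c + s) \<Longrightarrow> 2 * (c + s) \<le> int n \<Longrightarrow> c' = c + s"
    and "\<bar>c'\<bar> \<ge> \<bar>c\<bar> - 1"
proof -
  have wi: "0 \<le> w i" "w i < int n" using assms(1,2) by (auto simp: torus_def)
  have n1: "int n \<ge> 1" using assms(3) by simp
  have a: "0 \<le> (w i + s) mod int n" "(w i + s) mod int n < int n" using assms(3) by auto
  have c'd: "c' = centred_rep n ((w i + s) mod int n)" by (simp add: c'_def tstep_def)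
  have cw: "- int n < 2 * c" "2 * c \<le> int n" "c mod int n = w i" using centred_window[OF wi] by (auto simp: c_def)
  have c'w: "- int n < 2 * c'" "2 * c' \<le> int n" "c' mod int n = (w i + s) mod int n"
    using centred_window[OF a] by (auto simp: c'd)
  have cong: "c' mod int n = (c + s) mod int n"
    using c'w(3) cw(3) by (metis mod_add_left_eq)
  show eq: "c' = c + s" if "- int n < 2 * (c + s)" "2 * (c + s) \<le> int n"
    using window_unique[OF c'w(1,2) that cong] .
  show "\<bar>c'\<bar> \<ge> \<bar>c\<bar> - 1"
  proof (cases "- int n < 2 * (c + s) \<and> 2 * (c + s) \<le> int n")
    case True thus ?thesis using eq assms(4) by auto
  next
    case False
    show ?thesis
    proof (cases "2 * (c + s) > int n")
      case True
      have "c' = c + s - int n"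
      proof (rule window_unique[OF c'w(1,2)])
        show "- int n < 2 * (c + s - int n)" using True by (simp add: algebra_simps)
        show "2 * (c + s - int n) \<le> int n" using cw n1 assms(4) by (smt (verit))
        show "c' mod int n = (c + s - int n) mod int n" using cong by simp
      qed
      thus ?thesis using True cw assms(4) by (smt (verit))
    next
      case F2: False
      hence T: "2 * (c + s) \<le> - int n" using False by linarith
      have "c' = c + s + int n"
      proof (rule window_unique[OF c'w(1,2)])
        show "- int n < 2 * (c + s + int n)" using cw assms(4) by (smt (verit))
        show "2 * (c + s + int n) \<le> int n" using T by (simp add: algebra_simps)
        show "c' mod int n = (c + s + int n) mod int n" using cong by simp
      qed
      thus ?thesis using T cw assms(4) by (smt (verit))
    qed
  qed
qed

lemma cvec_tstep_other: "j \<noteq> i \<Longrightarrow> cvec n (tstep n w i s) j = cvec n w j"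
  by (simp add: cvec_def tstep_def)

lemma cvec_nowrap:
  assumes "w \<in> torus n d" "i < d" "n \<ge> 1" "s = 1 \<or> s = -1" "2 * torus_norm n d w + 2 < real n"
  shows "cvec n (tstep n w i s) = (cvec n w)(i := cvec n w i + s)"
proof
  fix j show "cvec n (tstep n w i s) j = ((cvec n w)(i := cvec n w i + s)) j"
  proof (cases "j = i")
    case True
    have b: "\<bar>real_of_int (cvec n w i)\<bar> \<le> torus_norm n d w"
      using comp_le_sqrt[OF assms(2), of "cvec n w"] by (simp add: norm_Nsq)
    hence "- int n < 2 * (cvec n w i + s)" "2 * (cvec n w i + s) \<le> int n"
      using assms(4,5) by (auto simp: abs_le_iff) 
    thus ?thesis using True nbr_coord(1)[OF assms(1-4)] by (simp add: cvec_def)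
  qed (simp add: cvec_tstep_other)
qed

lemma norm_tstep_ge:
  assumes "w \<in> torus n d" "i < d" "n \<ge> 1" "s = 1 \<or> s = -1" "torus_norm n d w \<ge> 1"
  shows "torus_norm n d (tstep n w i s) \<ge> torus_norm n d w - 1"
proof -
  let ?c = "real_of_int (cvec n w i)" and ?c' = "real_of_int (cvec n (tstep n w i s) i)"
  let ?r = "torus_norm n d w"
  have upd: "cvec n (tstep n w i s) = (cvec n w)(i := cvec n (tstep n w i s) i)"
    by (auto simp: fun_eq_iff cvec_tstep_other)
  have N': "Nsq d (cvec n (tstep n w i s)) = Nsq d (cvec n w) - ?c^2 + ?c'^2"
    by (subst upd, subst Nsq_upd[OF assms(2)]) simp
  have cc: "\<bar>?c'\<bar> \<ge> \<bar>?c\<bar> - 1" using nbr_coord(2)[OF assms(1-4)] by (simp add: cvec_def)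
  have cr: "\<bar>?c\<bar> \<le> ?r" using comp_le_sqrt[OF assms(2), of "cvec n w"] by (simp add: norm_Nsq)
  have rr: "?r^2 = Nsq d (cvec n w)" by (simp add: norm_Nsq Nsq_nonneg)
  have "?c'^2 \<ge> ?c^2 - 2 * \<bar>?c\<bar> + 1 \<or> ?c = 0"
  proof (cases "\<bar>?c\<bar> \<ge> 1")
    case True
    have "\<bar>?c'\<bar> \<ge> \<bar>?c\<bar> - 1" by (rule cc)
    hence "\<bar>?c'\<bar>^2 \<ge> (\<bar>?c\<bar> - 1)^2" using True by (intro power_mono) auto
    thus ?thesis by (simp add: power2_eq_square algebra_simps)
  next
    case False
    have "?c = 0"
    proof -
      have "\<bar>cvec n w i\<bar> < 1" using False by linarith
      thus ?thesis by simp
    qed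
    thus ?thesis by simp
  qed
  hence "Nsq d (cvec n (tstep n w i s)) \<ge> (?r - 1)^2"
  proof
    assume h: "?c'^2 \<ge> ?c^2 - 2 * \<bar>?c\<bar> + 1"
    have "(?r - 1)^2 = ?r^2 - 2 * ?r + 1" by (simp add: power2_eq_square algebra_simps)
    thus ?thesis using h N' rr cr by linarith
  next
    assume h: "?c = 0"
    have "(?r - 1)^2 \<le> ?r^2" using assms(5) by (simp add: power2_eq_square algebra_simps)
    moreover have "?c^2 = 0" using h by simp
    moreover have "?c'^2 \<ge> 0" by simp
    ultimately show ?thesis using N' rr by linarith
  qed
  hence "sqrt ((?r - 1)^2) \<le> sqrt (Nsq d (cvec n (tstep n w i s)))"
    by (rule real_sqrt_le_mono)
  thus ?thesis using assms(5) by (simp add: norm_Nsq[of n d "tstep n w i s"])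
qed


definition L0 :: "nat \<Rightarrow> ((nat\<Rightarrow>int) \<Rightarrow> real) \<Rightarrow> (nat\<Rightarrow>int) \<Rightarrow> real" where
  "L0 d \<Phi> v = \<Phi> v - (\<Sum>i<d. \<Sum>s\<in>{1::int,-1}. \<Phi> (v(i := v i + s))) / (2 * real d)"

lemma Ltor_L0:
  assumes "w \<in> torus n d" "n \<ge> 1" "2 * torus_norm n d w + 2 < real n"
  shows "Ltor n d (\<lambda>w. \<Phi> (cvec n w)) w = L0 d \<Phi> (cvec n w)"
proof -
  have "(\<Sum>i<d. \<Sum>s\<in>{1::int,-1}. \<Phi> (cvec n (tstep n w i s))) = (\<Sum>i<d. \<Sum>s\<in>{1::int,-1}. \<Phi> ((cvec n w)(i := cvec n w i + s)))"
    using cvec_nowrap[OF assms(1) _ assms(2) _ assms(3)] by (intro sum.cong refl) auto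
  thus ?thesis by (simp add: Ltor_def L0_def)
qed

lemma Ltor_vanish:
  assumes "w \<in> torus n d" "n \<ge> 1" "B \<ge> 0" "\<And>v. Nsq d v \<ge> B^2 \<Longrightarrow> \<Phi> v = 0"
    "torus_norm n d w \<ge> B + 1"
  shows "Ltor n d (\<lambda>w. \<Phi> (cvec n w)) w = 0"
proof -
  have big: "\<Phi> (cvec n v) = 0" if "torus_norm n d v \<ge> B" for v
  proof -
    have "B^2 \<le> (torus_norm n d v)^2" using that assms(3) by (intro power_mono) auto
    also have "\<dots> = Nsq d (cvec n v)" by (simp add: norm_Nsq Nsq_nonneg)
    finally show ?thesis by (rule assms(4))
  qed
  have "\<Phi> (cvec n w) = 0" using big assms(5) by simp
  moreover have "\<Phi> (cvec n (tstep n w i s)) = 0" if "i < d" "s \<in> {1,-1}" for i s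
  proof (rule big)
    have "torus_norm n d (tstep n w i s) \<ge> torus_norm n d w - 1"
      using norm_tstep_ge[OF assms(1) that(1) assms(2)] that(2) assms(3,5) by auto
    thus "torus_norm n d (tstep n w i s) \<ge> B" using assms(5) by linarith
  qed
  ultimately show ?thesis by (simp add: Ltor_def)
qed

lemma card_ball:
  assumes "M \<ge> 0"
  shows "real (card {w \<in> torus n d. torus_norm n d w < M}) \<le> (2 * M + 1) ^ d"
proof -
  define k where "k = \<lfloor>M\<rfloor>"
  have k0: "k \<ge> 0" using assms by (simp add: k_def)
  let ?A = "{w \<in> torus n d. torus_norm n d w < M}"
  let ?B = "PiE {..<d} (\<lambda>_. {-k..k})"
  let ?f = "\<lambda>w. restrict (cvec n w) {..<d}"
  have inj: "inj_on ?f ?A"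
  proof (rule inj_onI)
    fix w w' assume w: "w \<in> ?A" and w': "w' \<in> ?A" and e: "?f w = ?f w'"
    show "w = w'"
    proof
      fix i show "w i = w' i"
      proof (cases "i < d")
        case True
        have "cvec n w i = cvec n w' i" using fun_cong[OF e, of i] True by simp
        hence "centred_rep n (w i) mod int n = centred_rep n (w' i) mod int n" by (simp add: cvec_def)
        moreover have "0 \<le> w i" "w i < int n" "0 \<le> w' i" "w' i < int n" using w w' True by (auto simp: torus_def)
        ultimately show ?thesis using centred_window(3) by metis
      next
        case False thus ?thesis using w w' by (auto simp: torus_def)
      qed
    qed
  qed
  have sub: "?f ` ?A \<subseteq> ?B"
  proof
    fix y assume "y \<in> ?f ` ?A"
    then obtain w where w: "w \<in> ?A" and y: "y = ?f w" by blast
    show "y \<in> ?B" unfolding y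
    proof (rule restrict_PiE_iff[THEN iffD2], intro ballI)
      fix i assume i: "i \<in> {..<d}"
      have "\<bar>real_of_int (cvec n w i)\<bar> \<le> torus_norm n d w"
        using comp_le_sqrt[of i d "cvec n w"] i by (simp add: norm_Nsq)
      hence "\<bar>real_of_int (cvec n w i)\<bar> < M" using w by simp
      hence "\<bar>cvec n w i\<bar> \<le> k" unfolding k_def by linarith
      thus "cvec n w i \<in> {-k..k}" by auto
    qed
  qed
  have "card ?A \<le> card ?B" by (rule card_inj_on_le[OF inj sub]) (simp add: finite_PiE)
  also have "card ?B = (nat (2 * k + 1)) ^ d" using k0 by (simp add: card_PiE)
  finally have "real (card ?A) \<le> real (nat (2 * k + 1)) ^ d" by (metis of_nat_le_iff of_nat_power)
  also have "\<dots> \<le> (2 * M + 1) ^ d"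
  proof (rule power_mono)
    show "real (nat (2 * k + 1)) \<le> 2 * M + 1" using k0 unfolding k_def by linarith
  qed simp
  finally show ?thesis .
qed

lemma sq_sum_disjoint:
  fixes f :: "'a \<Rightarrow> real"
  assumes "finite A" "\<And>j k. j \<in> A \<Longrightarrow> k \<in> A \<Longrightarrow> j \<noteq> k \<Longrightarrow> f j = 0 \<or> f k = 0"
  shows "(\<Sum>j\<in>A. f j)^2 = (\<Sum>j\<in>A. (f j)^2)"
proof (cases "\<exists>j\<in>A. f j \<noteq> 0")
  case False thus ?thesis by simp
next
  case True
  then obtain j0 where j0: "j0 \<in> A" "f j0 \<noteq> 0" by blast
  have z: "f k = 0" if "k \<in> A - {j0}" for k using assms(2)[of j0 k] j0 that by auto
  have "(\<Sum>j\<in>A. f j) = f j0" using sum.remove[OF assms(1) j0(1), of f] z by simp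
  moreover have "(\<Sum>j\<in>A. (f j)^2) = (f j0)^2" using sum.remove[OF assms(1) j0(1), of "\<lambda>j. (f j)^2"] z by simp
  ultimately show ?thesis by simp
qed

lemma scales:
  fixes \<Phi> :: "nat \<Rightarrow> (nat\<Rightarrow>int) \<Rightarrow> real" and R b :: "nat \<Rightarrow> real"
  assumes n1: "n \<ge> 1" and d1: "d \<ge> 1"
  and A1: "\<And>j v. j < J \<Longrightarrow> Nsq d v \<ge> (2 * R j)^2 \<Longrightarrow> \<Phi> j v = 0"
  and A2: "\<And>j v. j < J \<Longrightarrow> sqrt (Nsq d v) < 2 * R j + 1 \<Longrightarrow> \<bar>L0 d (\<Phi> j) v\<bar> \<le> b j"
  and A3: "\<And>j v. j < J \<Longrightarrow> sqrt (Nsq d v) \<le> R j - 1 \<Longrightarrow> L0 d (\<Phi> j) v = 0"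
  and A4: "\<And>j. j < J \<Longrightarrow> 4 * R j + 4 < real n"
  and A5: "\<And>j k. j < k \<Longrightarrow> k < J \<Longrightarrow> 2 * R j + 1 \<le> R k - 1"
  and A6: "\<And>j. j < J \<Longrightarrow> R j \<ge> 0"
  shows "(\<Sum>w\<in>torus n d. (Ltor n d (\<lambda>w. \<Sum>j<J. \<Phi> j (cvec n w)) w)^2) \<le> (\<Sum>j<J. (4 * R j + 3)^d * (b j)^2)"
proof -
  define a where "a j w = Ltor n d (\<lambda>w. \<Phi> j (cvec n w)) w" for j w
  have prp: "a j w = 0 \<or> (R j - 1 < torus_norm n d w \<and> torus_norm n d w < 2 * R j + 1 \<and> \<bar>a j w\<bar> \<le> b j)"
    if w: "w \<in> torus n d" and j: "j < J" for w j
  proof (cases "torus_norm n d w \<ge> 2 * R j + 1")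
    case True
    have "a j w = 0" unfolding a_def
      by (rule Ltor_vanish[OF w n1 _ _ True]) (use A6[OF j] A1[OF j] in auto)
    thus ?thesis by simp
  next
    case False
    have "2 * torus_norm n d w + 2 < real n" using False A4[OF j] by linarith
    hence aL: "a j w = L0 d (\<Phi> j) (cvec n w)" unfolding a_def by (rule Ltor_L0[OF w n1])
    have sq: "sqrt (Nsq d (cvec n w)) = torus_norm n d w" by (simp add: norm_Nsq)
    show ?thesis
    proof (cases "torus_norm n d w \<le> R j - 1")
      case True thus ?thesis using aL A3[OF j, of "cvec n w"] sq by simp
    next
      case F2: False thus ?thesis using aL A2[OF j, of "cvec n w"] sq False by auto
    qed
  qed
  have "(\<Sum>w\<in>torus n d. (Ltor n d (\<lambda>w. \<Sum>j<J. \<Phi> j (cvec n w)) w)^2) = (\<Sum>w\<in>torus n d. (\<Sum>j<J. a j w)^2)"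
    unfolding a_def Ltor_sum ..
  also have "\<dots> = (\<Sum>w\<in>torus n d. \<Sum>j<J. (a j w)^2)"
  proof (intro sum.cong refl sq_sum_disjoint)
    fix w j k assume w: "w \<in> torus n d" and j: "j \<in> {..<J}" and k: "k \<in> {..<J}" and jk: "j \<noteq> k"
    show "a j w = 0 \<or> a k w = 0"
    proof (rule ccontr)
      assume "\<not> (a j w = 0 \<or> a k w = 0)"
      hence pj: "R j - 1 < torus_norm n d w \<and> torus_norm n d w < 2 * R j + 1"
        and pk: "R k - 1 < torus_norm n d w \<and> torus_norm n d w < 2 * R k + 1"
        using prp[OF w, of j] prp[OF w, of k] j k by auto
      show False
      proof (cases "j < k")
        case True thus False using A5[OF True] k pj pk by auto
      next
        case False hence "k < j" using jk by simp
        thus False using A5[of k j] j pj pk by auto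
      qed
    qed
  qed simp
  also have "\<dots> = (\<Sum>j<J. \<Sum>w\<in>torus n d. (a j w)^2)" by (rule sum.swap)
  also have "\<dots> \<le> (\<Sum>j<J. \<Sum>w\<in>torus n d. if torus_norm n d w < 2 * R j + 1 then (b j)^2 else 0)"
  proof (intro sum_mono)
    fix j w assume j: "j \<in> {..<J}" and w: "w \<in> torus n d"
    have "(a j w)^2 \<le> (b j)^2 \<and> torus_norm n d w < 2 * R j + 1 \<or> a j w = 0"
    proof -
      have "\<bar>a j w\<bar> \<le> b j \<Longrightarrow> (a j w)^2 \<le> (b j)^2"
        by (metis abs_le_square_iff abs_ge_self abs_le_D1 abs_of_nonneg abs_ge_zero order.trans)
      thus ?thesis using prp[OF w, of j] j by auto
    qed
    thus "(a j w)^2 \<le> (if torus_norm n d w < 2 * R j + 1 then (b j)^2 else 0)" by auto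
  qed
  also have "\<dots> = (\<Sum>j<J. real (card {w \<in> torus n d. torus_norm n d w < 2 * R j + 1}) * (b j)^2)"
    by (simp add: sum.If_cases finite_torus Int_def conj_commute)
  also have "\<dots> \<le> (\<Sum>j<J. (4 * R j + 3)^d * (b j)^2)"
  proof (intro sum_mono mult_right_mono)
    fix j assume j: "j \<in> {..<J}"
    have "real (card {w \<in> torus n d. torus_norm n d w < 2 * R j + 1}) \<le> (2 * (2 * R j + 1) + 1) ^ d"
      using A6[of j] j by (intro card_ball) auto
    thus "real (card {w \<in> torus n d. torus_norm n d w < 2 * R j + 1}) \<le> (4 * R j + 3)^d" by (simp add: algebra_simps)
  qed simp
  finally show ?thesis .
qed


definition Qf :: "real \<Rightarrow> real" where "Qf t = (max t 0)^2"
definition gf :: "real \<Rightarrow> real" where "gf t = 1 - 2/9 * (Qf (t - 1) - 2 * Qf (t - 5/2) + Qf (t - 4))"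
definition g1 :: "real \<Rightarrow> real" where "g1 t = -(2/9) * (2 * max (t - 1) 0 - 4 * max (t - 5/2) 0 + 2 * max (t - 4) 0)"

lemma Q_taylor:
  shows "0 \<le> Qf (a + u) - Qf a - 2 * max a 0 * u" "Qf (a + u) - Qf a - 2 * max a 0 * u \<le> u^2"
proof -
  have "0 \<le> Qf (a + u) - Qf a - 2 * max a 0 * u \<and> Qf (a + u) - Qf a - 2 * max a 0 * u \<le> u^2"
  proof (cases "a \<ge> 0")
    case True
    show ?thesis
    proof (cases "a + u \<ge> 0")
      case True2: True
      have "Qf (a + u) - Qf a - 2 * max a 0 * u = u^2" using True True2
        by (simp add: Qf_def power2_eq_square algebra_simps)
      thus ?thesis by simp
    next
      case False
      have e: "Qf (a + u) - Qf a - 2 * max a 0 * u = - a * (a + 2 * u)" using True False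
        by (simp add: Qf_def power2_eq_square algebra_simps)
      have "a + 2 * u \<le> 0" using True False by linarith
      hence "0 \<le> - a * (a + 2 * u)" using True by (simp add: mult_nonneg_nonpos)
      moreover have "- a * (a + 2 * u) \<le> u^2"
      proof -
        have "0 \<le> (a + u)^2" by simp
        thus ?thesis by (simp add: power2_eq_square algebra_simps)
      qed
      ultimately show ?thesis using e by simp
    qed
  next
    case False
    show ?thesis
    proof (cases "a + u \<ge> 0")
      case True
      have e: "Qf (a + u) - Qf a - 2 * max a 0 * u = (a + u)^2" using True False
        by (simp add: Qf_def)
      have "(a + u)^2 \<le> u^2" using True False by (intro power_mono) auto
      thus ?thesis using e by simp
    next
      case F2: False
      thus ?thesis using False by (simp add: Qf_def)
    qed
  qed
  thus "0 \<le> Qf (a + u) - Qf a - 2 * max a 0 * u" "Qf (a + u) - Qf a - 2 * max a 0 * u \<le> u^2" by auto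
qed

lemma g_taylor: "\<bar>gf (a + u) - gf a - g1 a * u\<bar> \<le> 8/9 * u^2"
proof -
  define e where "e c = Qf (a - c + u) - Qf (a - c) - 2 * max (a - c) 0 * u" for c
  have e01: "0 \<le> e c" "e c \<le> u^2" for c using Q_taylor[of "a - c" u] by (auto simp: e_def)
  have "gf (a + u) - gf a - g1 a * u = - 2/9 * (e 1 - 2 * e (5/2) + e 4)"
    unfolding gf_def g1_def e_def by (simp add: algebra_simps)
  moreover have "\<bar>e 1 - 2 * e (5/2) + e 4\<bar> \<le> 4 * u^2"
    using e01[of 1] e01[of "5/2"] e01[of 4] by (simp add: abs_le_iff)
  ultimately show ?thesis by (simp add: abs_mult)
qed

lemma g1_bound: "\<bar>g1 t\<bar> \<le> 2/3"
  unfolding g1_def by (simp add: abs_le_iff max_def) 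

lemma gf_one: "t \<le> 1 \<Longrightarrow> gf t = 1"
  by (simp add: gf_def Qf_def max_def)

lemma gf_zero: "t \<ge> 4 \<Longrightarrow> gf t = 0"
  by (simp add: gf_def Qf_def max_def power2_eq_square field_simps)


definition Dd :: "((nat\<Rightarrow>int) \<Rightarrow> real) \<Rightarrow> (nat\<Rightarrow>int) \<Rightarrow> nat \<Rightarrow> real" where
  "Dd \<Phi> v i = \<Phi> (v(i := v i + 1)) + \<Phi> (v(i := v i + -1)) - 2 * \<Phi> v"

lemma L0_D: "d \<ge> 1 \<Longrightarrow> L0 d \<Phi> v = - (\<Sum>i<d. Dd \<Phi> v i) / (2 * real d)"
  unfolding L0_def Dd_def by (simp add: sum_subtractf field_simps)

lemma L0_bound:
  assumes "d \<ge> 1" "\<And>i. i < d \<Longrightarrow> \<bar>Dd \<Phi> v i\<bar> \<le> B"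
  shows "\<bar>L0 d \<Phi> v\<bar> \<le> B / 2"
proof -
  have "\<bar>\<Sum>i<d. Dd \<Phi> v i\<bar> \<le> (\<Sum>i<d. B)"
    using assms(2) by (intro order.trans[OF sum_abs sum_mono]) auto
  hence "\<bar>\<Sum>i<d. Dd \<Phi> v i\<bar> \<le> real d * B" by simp
  thus ?thesis using assms(1) by (simp add: L0_D abs_divide field_simps)
qed

lemma L0_zero:
  assumes "d \<ge> 1" "\<And>i. i < d \<Longrightarrow> Dd \<Phi> v i = 0"
  shows "L0 d \<Phi> v = 0"
  using assms by (simp add: L0_D)

lemma Nsq_step: "i < d \<Longrightarrow> Nsq d (v(i := v i + s)) = Nsq d v + 2 * real_of_int s * real_of_int (v i) + (real_of_int s)^2"
  by (simp add: Nsq_upd power2_eq_square algebra_simps)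

definition Sb :: "nat \<Rightarrow> real \<Rightarrow> (nat\<Rightarrow>int) \<Rightarrow> real" where
  "Sb d R v = gf (Nsq d v / R^2)"

lemma Sb_step:
  assumes "i < d" "R > 0"
  shows "Sb d R (v(i := v i + 1)) = gf (Nsq d v / R^2 + (2 * real_of_int (v i) + 1) / R^2)"
    and "Sb d R (v(i := v i + -1)) = gf (Nsq d v / R^2 + (1 - 2 * real_of_int (v i)) / R^2)"
proof -
  have e1: "Nsq d (v(i := v i + 1)) = Nsq d v + (2 * real_of_int (v i) + 1)"
    using Nsq_step[OF assms(1), of v 1] by simp
  have e2: "Nsq d (v(i := v i + -1)) = Nsq d v + (1 - 2 * real_of_int (v i))"
    using Nsq_step[OF assms(1), of v "-1"] by simp
  show "Sb d R (v(i := v i + 1)) = gf (Nsq d v / R^2 + (2 * real_of_int (v i) + 1) / R^2)"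
    unfolding Sb_def e1 by (simp add: add_divide_distrib)
  show "Sb d R (v(i := v i + -1)) = gf (Nsq d v / R^2 + (1 - 2 * real_of_int (v i)) / R^2)"
    unfolding Sb_def e2 by (simp add: add_divide_distrib)
qed

lemma sq_bound_aux:
  fixes R p :: real
  assumes "R \<ge> 1/2" "\<bar>p\<bar> \<le> 2 * R + 1"
  shows "((2 * p + 1) / R^2)^2 \<le> 100 / R^2" "((1 - 2 * p) / R^2)^2 \<le> 100 / R^2"
proof -
  have R0: "R > 0" using assms by simp
  have "\<bar>2 * p + 1\<bar> \<le> 10 * R" "\<bar>1 - 2 * p\<bar> \<le> 10 * R" using assms by (auto simp: abs_le_iff)
  hence a: "(2 * p + 1)^2 \<le> (10 * R)^2" "(1 - 2 * p)^2 \<le> (10 * R)^2"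
    by (metis abs_le_square_iff abs_of_nonneg R0 less_imp_le mult_nonneg_nonneg zero_le_numeral)+
  have e: "(10 * R)^2 / (R^2)^2 = 100 / R^2" using R0 by (simp add: field_simps power2_eq_square)
  show "((2 * p + 1) / R^2)^2 \<le> 100 / R^2"
    using divide_right_mono[OF a(1), of "(R^2)^2"] e by (simp add: power_divide)
  show "((1 - 2 * p) / R^2)^2 \<le> 100 / R^2"
    using divide_right_mono[OF a(2), of "(R^2)^2"] e by (simp add: power_divide)
qed

lemma D_S_bound:
  assumes "i < d" "R \<ge> 1/2" "\<bar>real_of_int (v i)\<bar> \<le> 2 * R + 1"
  shows "\<bar>Dd (Sb d R) v i\<bar> \<le> 180 / R^2"
proof -
  have R0: "R > 0" using assms by simp
  define a where "a = Nsq d v / R^2"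
  define up where "up = (2 * real_of_int (v i) + 1) / R^2"
  define um where "um = (1 - 2 * real_of_int (v i)) / R^2"
  have D: "Dd (Sb d R) v i = gf (a + up) + gf (a + um) - 2 * gf a"
    unfolding Dd_def Sb_step[OF assms(1) R0] by (simp add: a_def up_def um_def Sb_def)
  have s: "up + um = 2 / R^2" by (simp add: up_def um_def add_divide_distrib[symmetric])
  have "gf (a + up) + gf (a + um) - 2 * gf a = g1 a * (up + um) + (gf (a + up) - gf a - g1 a * up) + (gf (a + um) - gf a - g1 a * um)"
    by (simp add: algebra_simps)
  hence "\<bar>gf (a + up) + gf (a + um) - 2 * gf a\<bar> \<le> \<bar>g1 a\<bar> * \<bar>up + um\<bar> + 8/9 * up^2 + 8/9 * um^2"
  proof -
    let ?X = "g1 a * (up + um)" and ?Y = "gf (a + up) - gf a - g1 a * up" and ?Z = "gf (a + um) - gf a - g1 a * um"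
    have "\<bar>?X + ?Y + ?Z\<bar> \<le> \<bar>?X\<bar> + \<bar>?Y\<bar> + \<bar>?Z\<bar>"
      using abs_triangle_ineq[of "?X + ?Y" ?Z] abs_triangle_ineq[of ?X ?Y] by linarith
    moreover have "\<bar>?X\<bar> = \<bar>g1 a\<bar> * \<bar>up + um\<bar>" by (simp add: abs_mult)
    ultimately show ?thesis using g_taylor[of a up] g_taylor[of a um] \<open>gf (a + up) + gf (a + um) - 2 * gf a = _\<close> by linarith
  qed
  also have "\<dots> \<le> 2/3 * (2 / R^2) + 8/9 * (100 / R^2) + 8/9 * (100 / R^2)"
    using g1_bound[of a] s sq_bound_aux[OF assms(2,3)] R0
    by (intro add_mono mult_mono) (auto simp: up_def um_def)
  also have "\<dots> \<le> 180 / R^2" using R0 by (simp add: field_simps)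
  finally show ?thesis using D by simp
qed

lemma S_diff_bound:
  assumes "i < d" "R \<ge> 1/2" "\<bar>real_of_int (v i)\<bar> \<le> 2 * R + 1"
  shows "\<bar>Sb d R (v(i := v i + 1)) - Sb d R (v(i := v i + -1))\<bar> \<le> 370 / R"
proof -
  have R0: "R > 0" using assms by simp
  define a where "a = Nsq d v / R^2"
  define up where "up = (2 * real_of_int (v i) + 1) / R^2"
  define um where "um = (1 - 2 * real_of_int (v i)) / R^2"
  have D: "Sb d R (v(i := v i + 1)) - Sb d R (v(i := v i + -1)) = gf (a + up) - gf (a + um)"
    unfolding Sb_step[OF assms(1) R0] by (simp add: a_def up_def um_def)
  have s: "up - um = 4 * real_of_int (v i) / R^2" by (simp add: up_def um_def diff_divide_distrib[symmetric])
  have "gf (a + up) - gf (a + um) = g1 a * (up - um) + (gf (a + up) - gf a - g1 a * up) - (gf (a + um) - gf a - g1 a * um)"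
    by (simp add: algebra_simps)
  hence "\<bar>gf (a + up) - gf (a + um)\<bar> \<le> \<bar>g1 a\<bar> * \<bar>up - um\<bar> + 8/9 * up^2 + 8/9 * um^2"
  proof -
    let ?X = "g1 a * (up - um)" and ?Y = "gf (a + up) - gf a - g1 a * up" and ?Z = "gf (a + um) - gf a - g1 a * um"
    have "\<bar>?X + ?Y - ?Z\<bar> \<le> \<bar>?X\<bar> + \<bar>?Y\<bar> + \<bar>?Z\<bar>"
      using abs_triangle_ineq4[of "?X + ?Y" ?Z] abs_triangle_ineq[of ?X ?Y] by linarith
    moreover have "\<bar>?X\<bar> = \<bar>g1 a\<bar> * \<bar>up - um\<bar>" by (simp add: abs_mult)
    ultimately show ?thesis using g_taylor[of a up] g_taylor[of a um] \<open>gf (a + up) - gf (a + um) = _\<close> by linarith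
  qed
  also have "\<dots> \<le> 2/3 * (4 * (4 * R) / R^2) + 8/9 * (100 / R^2) + 8/9 * (100 / R^2)"
  proof (intro add_mono mult_mono)
    show "\<bar>up - um\<bar> \<le> 4 * (4 * R) / R^2" unfolding s using assms(2,3) R0
      by (auto simp: abs_divide abs_mult intro!: divide_right_mono)
  qed (use g1_bound[of a] sq_bound_aux[OF assms(2,3)] R0 in \<open>auto simp: up_def um_def\<close>)
  also have "\<dots> \<le> 370 / R"
  proof -
    have "1 / R^2 \<le> 2 / R" using assms(2) R0 by (simp add: field_simps power2_eq_square)
    moreover have "2/3 * (4 * (4 * R) / R^2) = (32/3) / R" using R0 by (simp add: field_simps power2_eq_square)
    moreover have "8/9 * (100 / R^2) = (800/9) * (1 / R^2)" by simp
    ultimately have "2/3 * (4 * (4 * R) / R^2) + 8/9 * (100 / R^2) + 8/9 * (100 / R^2) \<le> (32/3)/R + (1600/9) * (2/R)"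
      by linarith
    also have "\<dots> \<le> 370 / R" using R0 by (simp add: field_simps)
    finally show ?thesis .
  qed
  finally show ?thesis using D by simp
qed


lemma nbr_Nsq:
  assumes "i < d" "s = 1 \<or> s = -1"
  shows "Nsq d (v(i := v i + s)) \<le> (sqrt (Nsq d v) + 1)^2"
    and "Nsq d (v(i := v i + s)) \<ge> (sqrt (Nsq d v) - 1)^2"
proof -
  have c: "\<bar>real_of_int (v i)\<bar> \<le> sqrt (Nsq d v)" by (rule comp_le_sqrt[OF assms(1)])
  have e: "Nsq d (v(i := v i + s)) = Nsq d v + 2 * real_of_int s * real_of_int (v i) + 1"
    using Nsq_step[OF assms(1), of v s] assms(2) by auto
  have sq: "(sqrt (Nsq d v))^2 = Nsq d v" using Nsq_nonneg by simp
  have t: "\<bar>2 * real_of_int s * real_of_int (v i)\<bar> \<le> 2 * sqrt (Nsq d v)"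
    using assms(2) c by (auto simp: abs_mult)
  show "Nsq d (v(i := v i + s)) \<le> (sqrt (Nsq d v) + 1)^2"
    using e sq t by (simp add: power2_eq_square algebra_simps abs_le_iff)
  show "Nsq d (v(i := v i + s)) \<ge> (sqrt (Nsq d v) - 1)^2"
    using e sq t by (simp add: power2_eq_square algebra_simps abs_le_iff)
qed

lemma Sb_one: "R > 0 \<Longrightarrow> Nsq d v \<le> R^2 \<Longrightarrow> Sb d R v = 1"
  unfolding Sb_def by (rule gf_one) (simp add: field_simps)

lemma Sb_zero: "R > 0 \<Longrightarrow> Nsq d v \<ge> (2 * R)^2 \<Longrightarrow> Sb d R v = 0"
  unfolding Sb_def by (rule gf_zero) (simp add: field_simps power2_eq_square)

lemma inner_one:
  assumes "i < d" "s = 1 \<or> s = -1" "R > 0" "sqrt (Nsq d v) \<le> R - 1"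
  shows "Sb d R (v(i := v i + s)) = 1" "Sb d R v = 1"
proof -
  have r0: "0 \<le> sqrt (Nsq d v)" using Nsq_nonneg[of d v] by simp
  have "(sqrt (Nsq d v) + 1)^2 \<le> R^2" using assms(4) r0 Nsq_nonneg[of d v] by (intro power_mono) auto
  thus "Sb d R (v(i := v i + s)) = 1" using nbr_Nsq(1)[OF assms(1,2), of v] assms(3) by (intro Sb_one) auto
  have "(sqrt (Nsq d v))^2 \<le> R^2" using assms(4) r0 by (intro power_mono) auto
  thus "Sb d R v = 1" using Nsq_nonneg[of d v] assms(3) by (intro Sb_one) auto
qed

lemma S_A2:
  assumes "d \<ge> 1" "R \<ge> 1/2" "sqrt (Nsq d v) < 2 * R + 1"
  shows "\<bar>L0 d (Sb d R) v\<bar> \<le> 90 / R^2"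
proof -
  have "\<bar>Dd (Sb d R) v i\<bar> \<le> 180 / R^2" if "i < d" for i
    using D_S_bound[OF that assms(2)] comp_le_sqrt[OF that, of v] assms(3) by simp
  thus ?thesis using L0_bound[OF assms(1)] by fastforce
qed

lemma S_A3:
  assumes "d \<ge> 1" "R > 0" "sqrt (Nsq d v) \<le> R - 1"
  shows "L0 d (Sb d R) v = 0"
proof (rule L0_zero[OF assms(1)])
  fix i assume i: "i < d"
  show "Dd (Sb d R) v i = 0" unfolding Dd_def
    using inner_one[OF i _ assms(2,3), of 1] inner_one[OF i _ assms(2,3), of "-1"] by simp
qed

definition lin :: "nat \<Rightarrow> (nat\<Rightarrow>int) \<Rightarrow> (nat\<Rightarrow>int) \<Rightarrow> real" where
  "lin d xc v = (\<Sum>j<d. real_of_int (xc j) * real_of_int (v j))"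

definition Tb :: "nat \<Rightarrow> real \<Rightarrow> (nat\<Rightarrow>int) \<Rightarrow> (nat\<Rightarrow>int) \<Rightarrow> real" where
  "Tb d R xc v = lin d xc v * Sb d R v"

lemma lin_step: "i < d \<Longrightarrow> lin d xc (v(i := v i + s)) = lin d xc v + real_of_int (xc i) * real_of_int s"
proof -
  assume i: "i < d"
  have "lin d xc (v(i := v i + s)) = real_of_int (xc i) * real_of_int (v i + s) + (\<Sum>j\<in>{..<d}-{i}. real_of_int (xc j) * real_of_int (v j))"
    unfolding lin_def using i by (simp add: sum.remove)
  moreover have "lin d xc v = real_of_int (xc i) * real_of_int (v i) + (\<Sum>j\<in>{..<d}-{i}. real_of_int (xc j) * real_of_int (v j))"
    unfolding lin_def using i by (simp add: sum.remove)
  ultimately show ?thesis by (simp add: algebra_simps)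
qed

lemma lin_bound:
  assumes "\<And>j. j < d \<Longrightarrow> \<bar>real_of_int (v j)\<bar> \<le> B"
  shows "\<bar>lin d xc v\<bar> \<le> real d * sqrt (Nsq d xc) * B"
proof -
  have "\<bar>lin d xc v\<bar> \<le> (\<Sum>j<d. \<bar>real_of_int (xc j)\<bar> * \<bar>real_of_int (v j)\<bar>)"
    unfolding lin_def by (rule order.trans[OF sum_abs]) (simp add: abs_mult)
  also have "\<dots> \<le> (\<Sum>j<d. sqrt (Nsq d xc) * B)"
    using comp_le_sqrt assms Nsq_nonneg[of d xc] by (intro sum_mono mult_mono) auto
  finally show ?thesis by simp
qed

lemma D_T:
  assumes "i < d"
  shows "Dd (Tb d R xc) v i = lin d xc v * Dd (Sb d R) v i +
     real_of_int (xc i) * (Sb d R (v(i := v i + 1)) - Sb d R (v(i := v i + -1)))"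
  unfolding Dd_def Tb_def lin_step[OF assms] by (simp add: algebra_simps)

lemma T_A2:
  assumes "d \<ge> 1" "R \<ge> 1/2" "sqrt (Nsq d v) < 2 * R + 1"
  shows "\<bar>L0 d (Tb d R xc) v\<bar> \<le> (360 * real d + 185) * sqrt (Nsq d xc) / R"
proof -
  have R0: "R > 0" using assms by simp
  let ?r = "sqrt (Nsq d xc)"
  have "\<bar>Dd (Tb d R xc) v i\<bar> \<le> (720 * real d + 370) * ?r / R" if i: "i < d" for i
  proof -
    have vb: "\<bar>real_of_int (v j)\<bar> \<le> 4 * R" if "j < d" for j
      using comp_le_sqrt[OF that, of v] assms by simp
    have l: "\<bar>lin d xc v\<bar> \<le> real d * ?r * (4 * R)" by (rule lin_bound[OF vb])
    have ds: "\<bar>Dd (Sb d R) v i\<bar> \<le> 180 / R^2"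
      using D_S_bound[OF i assms(2)] comp_le_sqrt[OF i, of v] assms(3) by simp
    have sd: "\<bar>Sb d R (v(i := v i + 1)) - Sb d R (v(i := v i + -1))\<bar> \<le> 370 / R"
      using S_diff_bound[OF i assms(2)] comp_le_sqrt[OF i, of v] assms(3) by simp
    have xi: "\<bar>real_of_int (xc i)\<bar> \<le> ?r" by (rule comp_le_sqrt[OF i])
    have "\<bar>Dd (Tb d R xc) v i\<bar> \<le> \<bar>lin d xc v\<bar> * \<bar>Dd (Sb d R) v i\<bar> +
        \<bar>real_of_int (xc i)\<bar> * \<bar>Sb d R (v(i := v i + 1)) - Sb d R (v(i := v i + -1))\<bar>"
      unfolding D_T[OF i] by (metis abs_mult abs_triangle_ineq)
    also have "\<dots> \<le> (real d * ?r * (4 * R)) * (180 / R^2) + ?r * (370 / R)"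
      using R0 Nsq_nonneg[of d xc] by (intro add_mono mult_mono l ds sd xi) auto
    also have "(real d * ?r * (4 * R)) * (180 / R^2) = 720 * real d * ?r / R"
      using R0 by (simp add: field_simps power2_eq_square)
    also have "720 * real d * ?r / R + ?r * (370 / R) = (720 * real d + 370) * ?r / R"
      using R0 by (simp add: field_simps)
    finally show ?thesis .
  qed
  hence "\<bar>L0 d (Tb d R xc) v\<bar> \<le> (720 * real d + 370) * ?r / R / 2"
    using L0_bound[OF assms(1)] by fastforce
  moreover have "(720 * real d + 370) * ?r / R / 2 = (360 * real d + 185) * ?r / R"
    using R0 by (simp add: field_simps)
  ultimately show ?thesis by simp
qed

lemma T_A3:
  assumes "d \<ge> 1" "R > 0" "sqrt (Nsq d v) \<le> R - 1"
  shows "L0 d (Tb d R xc) v = 0"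
proof (rule L0_zero[OF assms(1)])
  fix i assume i: "i < d"
  have "Dd (Sb d R) v i = 0" unfolding Dd_def
    using inner_one[OF i _ assms(2,3), of 1] inner_one[OF i _ assms(2,3), of "-1"] by simp
  thus "Dd (Tb d R xc) v i = 0" unfolding D_T[OF i]
    using inner_one[OF i _ assms(2,3), of 1] inner_one[OF i _ assms(2,3), of "-1"] by simp
qed

lemma T_A1: "R > 0 \<Longrightarrow> Nsq d v \<ge> (2 * R)^2 \<Longrightarrow> Tb d R xc v = 0"
  by (simp add: Tb_def Sb_zero)


lemma var_nonneg: "eta_incr_var n d torus_zero x \<ge> 0"
  unfolding var_eq by (auto intro!: divide_nonneg_nonneg sum_nonneg)

lemma test_bound:
  fixes \<Phi> :: "nat \<Rightarrow> (nat\<Rightarrow>int) \<Rightarrow> real" and R b :: "nat \<Rightarrow> real"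
  assumes n1: "n \<ge> 1" and d1: "d \<ge> 1" and xT: "x \<in> torus n d" and x0: "x \<noteq> torus_zero"
  and A1: "\<And>j v. j < J \<Longrightarrow> Nsq d v \<ge> (2 * R j)^2 \<Longrightarrow> \<Phi> j v = 0"
  and A2: "\<And>j v. j < J \<Longrightarrow> sqrt (Nsq d v) < 2 * R j + 1 \<Longrightarrow> \<bar>L0 d (\<Phi> j) v\<bar> \<le> b j"
  and A3: "\<And>j v. j < J \<Longrightarrow> sqrt (Nsq d v) \<le> R j - 1 \<Longrightarrow> L0 d (\<Phi> j) v = 0"
  and A4: "\<And>j. j < J \<Longrightarrow> 4 * R j + 4 < real n"
  and A5: "\<And>j k. j < k \<Longrightarrow> k < J \<Longrightarrow> 2 * R j + 1 \<le> R k - 1"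
  and A6: "\<And>j. j < J \<Longrightarrow> R j \<ge> 0"
  shows "((\<Sum>j<J. \<Phi> j (cvec n torus_zero)) - (\<Sum>j<J. \<Phi> j (cvec n x)))^2
     \<le> (2 * real d)^2 * eta_incr_var n d torus_zero x * (\<Sum>j<J. (4 * R j + 3)^d * (b j)^2)"
proof -
  let ?\<phi> = "\<lambda>w. \<Sum>j<J. \<Phi> j (cvec n w)"
  have "(?\<phi> torus_zero - ?\<phi> x)^2 \<le> (2 * real d)^2 * eta_incr_var n d torus_zero x * (\<Sum>w\<in>torus n d. (Ltor n d ?\<phi> w)^2)"
    by (rule main_ineq[OF n1 d1 xT x0])
  also have "\<dots> \<le> (2 * real d)^2 * eta_incr_var n d torus_zero x * (\<Sum>j<J. (4 * R j + 3)^d * (b j)^2)"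
    using var_nonneg by (intro mult_left_mono scales[OF n1 d1 A1 A2 A3 A4 A5 A6]) auto
  finally show ?thesis .
qed

lemma cvec_zero: "cvec n torus_zero = (\<lambda>i. 0)"
  by (simp add: cvec_def torus_zero_def centred_rep_def)

lemma Nsq_zero: "Nsq d (\<lambda>i. 0) = 0" by (simp add: Nsq_def)

lemma Nsq_x: "Nsq d (cvec n x) = (torus_norm n d x)^2"
  by (simp add: norm_Nsq Nsq_nonneg)

lemma norm_ge1:
  assumes "x \<in> torus n d" "x \<noteq> torus_zero" "n \<ge> 1"
  shows "torus_norm n d x \<ge> 1"
proof -
  obtain i where i: "x i \<noteq> 0" using assms(2) by (auto simp: torus_zero_def)
  have id: "i < d" using i assms(1) by (auto simp: torus_def)
  have xi: "0 \<le> x i" "x i < int n" using id assms(1) by (auto simp: torus_def)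
  have "cvec n x i \<noteq> 0"
  proof
    assume "cvec n x i = 0"
    hence "centred_rep n (x i) mod int n = 0" by (simp add: cvec_def)
    thus False using centred_window(3)[OF xi] i by simp
  qed
  hence c1: "1 \<le> \<bar>cvec n x i\<bar>" by (cases "cvec n x i > 0") auto
  have h: "(1::real) \<le> real_of_int \<bar>cvec n x i\<bar>" using c1 by (simp only: of_int_1_le_iff)
  have "(real_of_int (cvec n x i))^2 = (real_of_int \<bar>cvec n x i\<bar>)^2" by simp
  hence "1 \<le> (real_of_int (cvec n x i))^2" using one_le_power[OF h, of 2] by simp
  also have "\<dots> \<le> Nsq d (cvec n x)" by (rule comp_le_Nsq[OF id])
  finally have "1 \<le> Nsq d (cvec n x)" .
  thus ?thesis by (simp add: norm_Nsq)
qed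

lemma ex_scale:
  fixes y :: real assumes "y \<ge> 1"
  shows "\<exists>m::nat. 8 ^ m \<le> y \<and> y < 8 ^ (m + 1)"
proof -
  have k1: "nat \<lfloor>y\<rfloor> \<ge> 1" using assms by linarith
  obtain m where m: "8 ^ m \<le> nat \<lfloor>y\<rfloor>" "nat \<lfloor>y\<rfloor> < 8 ^ (m + 1)"
    using ex_power_ivl1[of 8 "nat \<lfloor>y\<rfloor>"] k1 by auto
  have fl: "real (nat \<lfloor>y\<rfloor>) \<le> y" "y < real (nat \<lfloor>y\<rfloor>) + 1" using assms by linarith+
  have "(8::real) ^ m \<le> real (nat \<lfloor>y\<rfloor>)" by (metis m(1) of_nat_le_iff of_nat_numeral of_nat_power)
  hence a: "8 ^ m \<le> y" using fl by linarith
  have "nat \<lfloor>y\<rfloor> + 1 \<le> 8 ^ (m + 1)" using m(2) by simp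
  hence "real (nat \<lfloor>y\<rfloor> + 1) \<le> real (8 ^ (m + 1))" by (simp only: of_nat_le_iff)
  hence "real (nat \<lfloor>y\<rfloor>) + 1 \<le> real (8 ^ (m + 1))" by simp
  hence "real (nat \<lfloor>y\<rfloor>) + 1 \<le> (8::real) ^ (m + 1)" by (metis of_nat_numeral of_nat_power)
  hence b: "y < 8 ^ (m + 1)" using fl by linarith
  show ?thesis using a b by blast
qed


lemma Sb_at0: "R > 0 \<Longrightarrow> Sb d R (\<lambda>i. 0) = 1"
  by (rule Sb_one) (auto simp: Nsq_zero)

lemma solveV:
  fixes D K V B :: real
  assumes "D \<le> K * V * B" "K > 0" "B > 0"
  shows "V \<ge> D / (K * B)"
  using assms by (simp add: pos_divide_le_eq mult_ac)

lemma case_ge5: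
  assumes d: "d \<ge> 5" and n: "real n \<ge> 64" and xT: "x \<in> torus n d" and x0: "x \<noteq> torus_zero"
  shows "eta_incr_var n d torus_zero x \<ge> 1 / ((2 * real d)^2 * (5 ^ d * 129600))"
proof -
  have n1: "n \<ge> 1" using n by simp
  have d1: "d \<ge> 1" using d by simp
  let ?R = "\<lambda>j::nat. 1/2 :: real"
  let ?b = "\<lambda>j::nat. 360 :: real"
  let ?\<Phi> = "\<lambda>j::nat. Sb d (1/2)"
  have r1: "torus_norm n d x \<ge> 1" by (rule norm_ge1[OF xT x0 n1])
  have main: "((\<Sum>j<1. ?\<Phi> j (cvec n torus_zero)) - (\<Sum>j<1. ?\<Phi> j (cvec n x)))^2
     \<le> (2 * real d)^2 * eta_incr_var n d torus_zero x * (\<Sum>j<1. (4 * ?R j + 3)^d * (?b j)^2)"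
  proof (rule test_bound[OF n1 d1 xT x0])
    show "\<And>j v. j < 1 \<Longrightarrow> Nsq d v \<ge> (2 * ?R j)^2 \<Longrightarrow> ?\<Phi> j v = 0" by (rule Sb_zero) auto
    show "\<And>j v. j < 1 \<Longrightarrow> sqrt (Nsq d v) < 2 * ?R j + 1 \<Longrightarrow> \<bar>L0 d (?\<Phi> j) v\<bar> \<le> ?b j"
      using S_A2[OF d1, of "1/2"] by (simp add: power2_eq_square)
    show "\<And>j v. j < 1 \<Longrightarrow> sqrt (Nsq d v) \<le> ?R j - 1 \<Longrightarrow> L0 d (?\<Phi> j) v = 0"
      using S_A3[OF d1, of "1/2"] by simp
    show "\<And>j. j < 1 \<Longrightarrow> 4 * ?R j + 4 < real n" using n by simp
  qed auto
  have p0: "?\<Phi> 0 (cvec n torus_zero) = 1" by (simp add: cvec_zero Sb_at0)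
  have px: "?\<Phi> 0 (cvec n x) = 0"
  proof (rule Sb_zero)
    have "(2 * (1/2::real))^2 \<le> (torus_norm n d x)^2" using r1 by (simp add: one_le_power)
    thus "(2 * (1/2::real))^2 \<le> Nsq d (cvec n x)" by (simp add: Nsq_x)
  qed simp
  have "1 \<le> (2 * real d)^2 * eta_incr_var n d torus_zero x * (5 ^ d * 129600)"
    using main p0 px by simp
  thus ?thesis using solveV[of 1 "(2 * real d)^2" "eta_incr_var n d torus_zero x" "5 ^ d * 129600"] d by simp
qed

lemma case3:
  assumes d: "d = 3" and n: "real n \<ge> 64" and xT: "x \<in> torus n d" and x0: "x \<noteq> torus_zero"
    and small: "torus_norm n d x < real n / 64"
  shows "eta_incr_var n d torus_zero x \<ge> torus_norm n d x / (36 * (125 * 129600))"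
proof -
  have n1: "n \<ge> 1" using n by simp
  have d1: "d \<ge> 1" using d by simp
  define r where "r = torus_norm n d x"
  have r1: "r \<ge> 1" unfolding r_def by (rule norm_ge1[OF xT x0 n1])
  let ?R = "\<lambda>j::nat. r/2"
  let ?b = "\<lambda>j::nat. 90 / (r/2)^2"
  let ?\<Phi> = "\<lambda>j::nat. Sb d (r/2)"
  have main: "((\<Sum>j<1. ?\<Phi> j (cvec n torus_zero)) - (\<Sum>j<1. ?\<Phi> j (cvec n x)))^2
     \<le> (2 * real d)^2 * eta_incr_var n d torus_zero x * (\<Sum>j<1. (4 * ?R j + 3)^d * (?b j)^2)"
  proof (rule test_bound[OF n1 d1 xT x0])
    show "\<And>j v. j < 1 \<Longrightarrow> Nsq d v \<ge> (2 * ?R j)^2 \<Longrightarrow> ?\<Phi> j v = 0" using r1 by (intro Sb_zero) auto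
    show "\<And>j v. j < 1 \<Longrightarrow> sqrt (Nsq d v) < 2 * ?R j + 1 \<Longrightarrow> \<bar>L0 d (?\<Phi> j) v\<bar> \<le> ?b j"
      using S_A2[OF d1, of "r/2"] r1 by simp
    show "\<And>j v. j < 1 \<Longrightarrow> sqrt (Nsq d v) \<le> ?R j - 1 \<Longrightarrow> L0 d (?\<Phi> j) v = 0"
      using S_A3[OF d1, of "r/2"] r1 by simp
    show "\<And>j. j < 1 \<Longrightarrow> 4 * ?R j + 4 < real n" using n small unfolding r_def by simp
  qed (use r1 in auto)
  have p0: "?\<Phi> 0 (cvec n torus_zero) = 1" using r1 by (simp add: cvec_zero Sb_at0)
  have px: "?\<Phi> 0 (cvec n x) = 0" using r1 by (intro Sb_zero) (auto simp: Nsq_x r_def)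
  have B: "(4 * (r/2) + 3)^3 * (90 / (r/2)^2)^2 \<le> 125 * 129600 / r"
  proof -
    have "(4 * (r/2) + 3)^3 \<le> (5 * r)^3" using r1 by (intro power_mono) auto
    hence "(4 * (r/2) + 3)^3 * (90 / (r/2)^2)^2 \<le> (5 * r)^3 * (90 / (r/2)^2)^2"
      by (intro mult_right_mono) auto
    also have "\<dots> = 125 * 129600 / r" using r1 by (simp add: field_simps power2_eq_square power3_eq_cube)
    finally show ?thesis .
  qed
  have "1 \<le> (2 * real d)^2 * eta_incr_var n d torus_zero x * ((4 * (r/2) + 3)^3 * (90 / (r/2)^2)^2)"
    using main p0 px d by simp
  also have "\<dots> \<le> (2 * real d)^2 * eta_incr_var n d torus_zero x * (125 * 129600 / r)"
    using B var_nonneg by (intro mult_left_mono) auto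
  finally have "1 \<le> 36 * eta_incr_var n d torus_zero x * (125 * 129600 / r)" using d by simp
  hence "1 * r \<le> 36 * eta_incr_var n d torus_zero x * (125 * 129600)" using r1 by (simp add: field_simps)
  thus ?thesis using solveV[of r 36 "eta_incr_var n d torus_zero x" "125 * 129600"] r_def by simp
qed


lemma ln_8: "ln (8::real) \<le> 3"
proof -
  have "ln (8::real) = 3 * ln 2" by (metis ln_realpow numeral_power_eq_of_nat_cancel_iff of_nat_numeral power3_eq_cube zero_less_numeral
        numeral_times_numeral semiring_norm(12) semiring_norm(13) semiring_norm(5) num_double power_numeral_even power_numeral_odd)
  thus ?thesis using ln_2_less_1 by simp
qed

lemma case4:
  assumes d: "d = 4" and n: "real n \<ge> 64" and xT: "x \<in> torus n d" and x0: "x \<noteq> torus_zero"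
    and small: "torus_norm n d x < real n / 64"
  shows "eta_incr_var n d torus_zero x \<ge> ln (1 + torus_norm n d x) / (4 * (64 * 81000000))"
proof -
  have n1: "n \<ge> 1" using n by simp
  have d1: "d \<ge> 1" using d by simp
  define r where "r = torus_norm n d x"
  have r1: "r \<ge> 1" unfolding r_def by (rule norm_ge1[OF xT x0 n1])
  obtain m where m: "8 ^ m \<le> r" "r < 8 ^ (m + 1)" using ex_scale[OF r1] by blast
  define J where "J = m + 1"
  define R where "R j = (8::real) ^ j / 2" for j :: nat
  define b where "b j = 90 / (R j)^2" for j :: nat
  define \<Phi> where "\<Phi> j = Sb d (R j)" for j :: nat
  have R12: "R j \<ge> 1/2" for j unfolding R_def by simp
  have Rr: "2 * R j \<le> r" if "j < J" for j
  proof -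
    have h: "(8::real) ^ j \<le> 8 ^ m" using that by (intro power_increasing) (auto simp: J_def)
    show ?thesis unfolding R_def using h m(1) by linarith
  qed
  have main: "((\<Sum>j<J. \<Phi> j (cvec n torus_zero)) - (\<Sum>j<J. \<Phi> j (cvec n x)))^2
     \<le> (2 * real d)^2 * eta_incr_var n d torus_zero x * (\<Sum>j<J. (4 * R j + 3)^d * (b j)^2)"
  proof (rule test_bound[OF n1 d1 xT x0])
    show "\<And>j v. j < J \<Longrightarrow> Nsq d v \<ge> (2 * R j)^2 \<Longrightarrow> \<Phi> j v = 0"
      unfolding \<Phi>_def using R12 by (intro Sb_zero) (auto intro: less_le_trans[of 0 "1/2"])
    show "\<And>j v. j < J \<Longrightarrow> sqrt (Nsq d v) < 2 * R j + 1 \<Longrightarrow> \<bar>L0 d (\<Phi> j) v\<bar> \<le> b j"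
      unfolding \<Phi>_def b_def using S_A2[OF d1] R12 by blast
    show "\<And>j v. j < J \<Longrightarrow> sqrt (Nsq d v) \<le> R j - 1 \<Longrightarrow> L0 d (\<Phi> j) v = 0"
      unfolding \<Phi>_def using S_A3[OF d1] R12 by (meson less_le_trans zero_less_divide_1_iff zero_less_numeral)
    show "\<And>j. j < J \<Longrightarrow> 4 * R j + 4 < real n"
    proof -
      fix j assume j: "j < J"
      show "4 * R j + 4 < real n" using Rr[OF j] n small unfolding r_def by linarith
    qed
    show "\<And>j k. j < k \<Longrightarrow> k < J \<Longrightarrow> 2 * R j + 1 \<le> R k - 1"
    proof -
      fix j k :: nat assume jk: "j < k"
      have "(8::real) ^ (j + 1) \<le> 8 ^ k" using jk by (intro power_increasing) auto
      hence h1: "8 * (8::real) ^ j \<le> 8 ^ k" by simp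
      have h2: "(1::real) \<le> 8 ^ j" by simp
      show "2 * R j + 1 \<le> R k - 1" unfolding R_def using h1 h2 by linarith
    qed
    show "\<And>j. j < J \<Longrightarrow> R j \<ge> 0" using R12 by (meson less_le_trans le_less zero_less_divide_1_iff zero_less_numeral)
  qed
  have p0: "(\<Sum>j<J. \<Phi> j (cvec n torus_zero)) = real J"
    unfolding \<Phi>_def cvec_zero using R12 by (simp add: Sb_at0 less_le_trans[of 0 "1/2"])
  have px: "(\<Sum>j<J. \<Phi> j (cvec n x)) = 0"
  proof (rule sum.neutral, intro ballI)
    fix j assume j: "j \<in> {..<J}"
    have "(2 * R j)^2 \<le> r^2" using Rr[of j] j R12[of j] by (intro power_mono) auto
    thus "\<Phi> j (cvec n x) = 0" unfolding \<Phi>_def using R12[of j]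
      by (intro Sb_zero) (auto simp: Nsq_x r_def)
  qed
  have B: "(\<Sum>j<J. (4 * R j + 3)^d * (b j)^2) \<le> real J * 81000000"
  proof -
    have "(4 * R j + 3)^4 * (b j)^2 \<le> 81000000" for j
    proof -
      have Rp: "R j > 0" using R12[of j] by simp
      have "(4 * R j + 3)^4 \<le> (10 * R j)^4" using R12[of j] by (intro power_mono) auto
      hence "(4 * R j + 3)^4 * (b j)^2 \<le> (10 * R j)^4 * (b j)^2" by (intro mult_right_mono) auto
      also have "\<dots> = 81000000" using Rp unfolding b_def by (simp add: field_simps power2_eq_square power4_eq_xxxx)
      finally show ?thesis .
    qed
    hence "(\<Sum>j<J. (4 * R j + 3)^d * (b j)^2) \<le> (\<Sum>j<J. 81000000)" using d by (intro sum_mono) auto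
    thus ?thesis by simp
  qed
  have J1: "real J \<ge> 1" unfolding J_def by simp
  have "(real J)^2 \<le> 64 * eta_incr_var n d torus_zero x * (\<Sum>j<J. (4 * R j + 3)^d * (b j)^2)"
    using main p0 px d by simp
  also have "\<dots> \<le> 64 * eta_incr_var n d torus_zero x * (real J * 81000000)"
    using B var_nonneg by (intro mult_left_mono) auto
  finally have "real J * real J \<le> real J * (64 * eta_incr_var n d torus_zero x * 81000000)"
    by (simp add: power2_eq_square mult_ac)
  hence VJ: "real J \<le> 64 * eta_incr_var n d torus_zero x * 81000000" using J1 by simp
  have "ln (1 + r) \<le> 4 * real J"
  proof -
    have "1 + r \<le> 2 * 8 ^ J" using m r1 unfolding J_def by simp
    hence "ln (1 + r) \<le> ln (2 * 8 ^ J)" using r1 by (intro ln_mono) auto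
    also have "\<dots> = ln 2 + real J * ln 8" by (simp add: ln_mult ln_realpow)
    also have "\<dots> \<le> 1 + real J * 3" using ln_2_less_1 ln_8 by (intro add_mono mult_left_mono) auto
    finally show ?thesis using J1 by simp
  qed
  hence "ln (1 + r) \<le> 4 * (64 * eta_incr_var n d torus_zero x * 81000000)" using VJ by simp
  thus ?thesis unfolding r_def by (simp add: field_simps)
qed


lemma lin_zero: "lin d xc (\<lambda>i. 0) = 0" by (simp add: lin_def)
lemma lin_self: "lin d xc xc = Nsq d xc" by (simp add: lin_def Nsq_def power2_eq_square)

lemma case1:
  assumes d: "d = 1" and n: "real n \<ge> 64" and xT: "x \<in> torus n d" and x0: "x \<noteq> torus_zero"
    and small: "torus_norm n d x < real n / 64"
  shows "eta_incr_var n d torus_zero x \<ge> real n * (torus_norm n d x)^2 / (4 * (80 * 545^2))"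
proof -
  have n1: "n \<ge> 1" using n by simp
  have d1: "d \<ge> 1" using d by simp
  define r where "r = torus_norm n d x"
  have r1: "r \<ge> 1" unfolding r_def by (rule norm_ge1[OF xT x0 n1])
  define xc where "xc = cvec n x"
  have rx: "sqrt (Nsq d xc) = r" by (simp add: xc_def r_def norm_Nsq)
  define R0 where "R0 = real n / 8"
  have R12: "R0 \<ge> 1/2" using n by (simp add: R0_def)
  let ?R = "\<lambda>j::nat. R0"
  let ?b = "\<lambda>j::nat. (360 * real d + 185) * r / R0"
  let ?\<Phi> = "\<lambda>j::nat. Tb d R0 xc"
  have main: "((\<Sum>j<1. ?\<Phi> j (cvec n torus_zero)) - (\<Sum>j<1. ?\<Phi> j (cvec n x)))^2
     \<le> (2 * real d)^2 * eta_incr_var n d torus_zero x * (\<Sum>j<1. (4 * ?R j + 3)^d * (?b j)^2)"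
  proof (rule test_bound[OF n1 d1 xT x0])
    show "\<And>j v. j < 1 \<Longrightarrow> Nsq d v \<ge> (2 * ?R j)^2 \<Longrightarrow> ?\<Phi> j v = 0" using R12 by (intro T_A1) auto
    show "\<And>j v. j < 1 \<Longrightarrow> sqrt (Nsq d v) < 2 * ?R j + 1 \<Longrightarrow> \<bar>L0 d (?\<Phi> j) v\<bar> \<le> ?b j"
    proof -
      fix j v assume "sqrt (Nsq d v) < 2 * ?R j + 1"
      from T_A2[OF d1 R12 this, of xc] rx show "\<bar>L0 d (?\<Phi> j) v\<bar> \<le> ?b j" by simp
    qed
    show "\<And>j v. j < 1 \<Longrightarrow> sqrt (Nsq d v) \<le> ?R j - 1 \<Longrightarrow> L0 d (?\<Phi> j) v = 0"
      using T_A3[OF d1] R12 by simp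
    show "\<And>j. j < 1 \<Longrightarrow> 4 * ?R j + 4 < real n" using n unfolding R0_def by simp
  qed (use R12 in auto)
  have p0: "?\<Phi> 0 (cvec n torus_zero) = 0" by (simp add: cvec_zero Tb_def lin_zero)
  have px: "?\<Phi> 0 (cvec n x) = r^2"
  proof -
    have "Nsq d xc = r^2" by (simp add: xc_def r_def Nsq_x)
    moreover have "r^2 \<le> R0^2" using small r1 unfolding R0_def r_def by (intro power_mono) auto
    ultimately have "Sb d R0 xc = 1" using R12 by (intro Sb_one) auto
    thus ?thesis by (simp add: Tb_def lin_self xc_def[symmetric] \<open>Nsq d xc = r^2\<close>)
  qed
  have R0p: "R0 > 0" using R12 by simp
  have B: "(4 * R0 + 3) * (545 * r / R0)^2 \<le> 80 * 545^2 * r^2 / real n"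
  proof -
    have "(4 * R0 + 3) * (545 * r / R0)^2 \<le> (10 * R0) * (545 * r / R0)^2"
      using R12 by (intro mult_right_mono) auto
    also have "\<dots> = 80 * 545^2 * r^2 / real n" using R0p unfolding R0_def by (simp add: field_simps power2_eq_square)
    finally show ?thesis .
  qed
  have "(r^2)^2 \<le> 4 * eta_incr_var n d torus_zero x * ((4 * R0 + 3) * (545 * r / R0)^2)"
    using main p0 px d by simp
  also have "\<dots> \<le> 4 * eta_incr_var n d torus_zero x * (80 * 545^2 * r^2 / real n)"
    using B var_nonneg by (intro mult_left_mono) auto
  finally have h0: "(r^2)^2 \<le> 4 * eta_incr_var n d torus_zero x * (80 * 545^2 * r^2 / real n)" .
  have e2: "4 * eta_incr_var n d torus_zero x * (80 * 545^2 * r^2 / real n) = (r^2) * (4 * eta_incr_var n d torus_zero x * 80 * 545^2 / real n)"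
    using n by (simp add: field_simps)
  have h: "(r^2) * (r^2) \<le> (r^2) * (4 * eta_incr_var n d torus_zero x * 80 * 545^2 / real n)"
    using h0 unfolding e2 power2_eq_square[of "r^2"] .
  have "r^2 > 0" using r1 by simp
  hence "r^2 \<le> 4 * eta_incr_var n d torus_zero x * 80 * 545^2 / real n" by (rule mult_left_le_imp_le[OF h])
  hence "real n * r^2 \<le> 4 * eta_incr_var n d torus_zero x * 80 * 545^2" using n by (simp add: field_simps)
  thus ?thesis unfolding r_def by (simp add: field_simps)
qed

lemma case2:
  assumes d: "d = 2" and n: "real n \<ge> 64" and xT: "x \<in> torus n d" and x0: "x \<noteq> torus_zero"
    and small: "torus_norm n d x < real n / 64"
  shows "eta_incr_var n d torus_zero x \<ge> (torus_norm n d x)^2 * ln (real n / torus_norm n d x) / (7 * (16 * (100 * 905^2)))"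
proof -
  have n1: "n \<ge> 1" using n by simp
  have d1: "d \<ge> 1" using d by simp
  define r where "r = torus_norm n d x"
  have r1: "r \<ge> 1" unfolding r_def by (rule norm_ge1[OF xT x0 n1])
  define xc where "xc = cvec n x"
  have rx: "sqrt (Nsq d xc) = r" by (simp add: xc_def r_def norm_Nsq)
  have y1: "real n / (16 * r) \<ge> 1" using small r1 unfolding r_def by (simp add: field_simps)
  obtain m where m: "8 ^ m \<le> real n / (16 * r)" "real n / (16 * r) < 8 ^ (m + 1)" using ex_scale[OF y1] by blast
  define J where "J = m + 1"
  define R where "R j = (8::real) ^ j * r" for j :: nat
  define b where "b j = (360 * real d + 185) * r / R j" for j :: nat
  define \<Phi> where "\<Phi> j = Tb d (R j) xc" for j :: nat
  have Rr: "R j \<ge> r" for j unfolding R_def using r1 by simp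
  have R12: "R j \<ge> 1/2" for j using Rr[of j] r1 by simp
  have Rn: "R j \<le> real n / 16" if "j < J" for j
  proof -
    have h: "(8::real) ^ j \<le> 8 ^ m" using that by (intro power_increasing) (auto simp: J_def)
    have "R j \<le> 8 ^ m * r" unfolding R_def using h r1 by (intro mult_right_mono) auto
    also have "\<dots> \<le> real n / (16 * r) * r" using m(1) r1 by (intro mult_right_mono) auto
    also have "\<dots> = real n / 16" using r1 by simp
    finally show ?thesis .
  qed
  have main: "((\<Sum>j<J. \<Phi> j (cvec n torus_zero)) - (\<Sum>j<J. \<Phi> j (cvec n x)))^2
     \<le> (2 * real d)^2 * eta_incr_var n d torus_zero x * (\<Sum>j<J. (4 * R j + 3)^d * (b j)^2)"
  proof (rule test_bound[OF n1 d1 xT x0])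
    show "\<And>j v. j < J \<Longrightarrow> Nsq d v \<ge> (2 * R j)^2 \<Longrightarrow> \<Phi> j v = 0"
      unfolding \<Phi>_def using R12 by (intro T_A1) (auto intro: less_le_trans[of 0 "1/2"])
    show "\<And>j v. j < J \<Longrightarrow> sqrt (Nsq d v) < 2 * R j + 1 \<Longrightarrow> \<bar>L0 d (\<Phi> j) v\<bar> \<le> b j"
    proof -
      fix j v assume "sqrt (Nsq d v) < 2 * R j + 1"
      from T_A2[OF d1 R12 this, of xc] rx show "\<bar>L0 d (\<Phi> j) v\<bar> \<le> b j" by (simp add: \<Phi>_def b_def)
    qed
    show "\<And>j v. j < J \<Longrightarrow> sqrt (Nsq d v) \<le> R j - 1 \<Longrightarrow> L0 d (\<Phi> j) v = 0"
      unfolding \<Phi>_def using T_A3[OF d1] R12 by (meson less_le_trans zero_less_divide_1_iff zero_less_numeral)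
    show "\<And>j. j < J \<Longrightarrow> 4 * R j + 4 < real n"
    proof -
      fix j assume j: "j < J"
      show "4 * R j + 4 < real n" using Rn[OF j] n by linarith
    qed
    show "\<And>j k. j < k \<Longrightarrow> k < J \<Longrightarrow> 2 * R j + 1 \<le> R k - 1"
    proof -
      fix j k :: nat assume jk: "j < k"
      have "(8::real) ^ (j + 1) \<le> 8 ^ k" using jk by (intro power_increasing) auto
      hence "8 * (8::real) ^ j * r \<le> 8 ^ k * r" using r1 by (intro mult_right_mono) auto
      moreover have "(1::real) \<le> 8 ^ j * r"
      proof -
        have h: "(1::real) \<le> 8 ^ j" by simp
        show ?thesis using mult_mono[OF h r1] by simp
      qed
      ultimately show "2 * R j + 1 \<le> R k - 1" unfolding R_def by linarith
    qed
    show "\<And>j. j < J \<Longrightarrow> R j \<ge> 0" using R12 by (meson less_le_trans le_less zero_less_divide_1_iff zero_less_numeral)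
  qed
  have p0: "(\<Sum>j<J. \<Phi> j (cvec n torus_zero)) = 0"
    unfolding \<Phi>_def cvec_zero by (simp add: Tb_def lin_zero)
  have Nx: "Nsq d xc = r^2" by (simp add: xc_def r_def Nsq_x)
  have px: "(\<Sum>j<J. \<Phi> j (cvec n x)) = real J * r^2"
  proof -
    have "\<Phi> j (cvec n x) = r^2" for j
    proof -
      have "r^2 \<le> (R j)^2" using Rr[of j] r1 by (intro power_mono) auto
      hence "Sb d (R j) xc = 1" using R12[of j] Nx by (intro Sb_one) auto
      thus ?thesis unfolding \<Phi>_def xc_def[symmetric] by (simp add: Tb_def lin_self Nx)
    qed
    thus ?thesis by simp
  qed
  have B: "(\<Sum>j<J. (4 * R j + 3)^d * (b j)^2) \<le> real J * (100 * 905^2 * r^2)"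
  proof -
    have "(4 * R j + 3)^2 * (b j)^2 \<le> 100 * 905^2 * r^2" for j
    proof -
      have Rp: "R j > 0" using R12[of j] by simp
      have "(4 * R j + 3)^2 \<le> (10 * R j)^2" using R12[of j] by (intro power_mono) auto
      hence "(4 * R j + 3)^2 * (b j)^2 \<le> (10 * R j)^2 * (b j)^2" by (intro mult_right_mono) auto
      also have "\<dots> = 100 * 905^2 * r^2" using Rp d unfolding b_def by (simp add: field_simps power2_eq_square)
      finally show ?thesis .
    qed
    hence "(\<Sum>j<J. (4 * R j + 3)^d * (b j)^2) \<le> (\<Sum>j<J. 100 * 905^2 * r^2)" using d by (intro sum_mono) auto
    thus ?thesis by simp
  qed
  have J1: "real J \<ge> 1" unfolding J_def by simp
  let ?V = "eta_incr_var n d torus_zero x"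
  have "(real J * r^2)^2 \<le> 16 * ?V * (\<Sum>j<J. (4 * R j + 3)^d * (b j)^2)"
    using main p0 px d by simp
  also have "\<dots> \<le> 16 * ?V * (real J * (100 * 905^2 * r^2))"
    using B var_nonneg by (intro mult_left_mono) auto
  finally have h: "(real J * r^2) * (real J * r^2) \<le> (real J * r^2) * (16 * ?V * (100 * 905^2))"
    by (simp add: power2_eq_square mult_ac)
  have "real J * r^2 > 0" using J1 r1 by simp
  hence VJ: "real J * r^2 \<le> 16 * ?V * (100 * 905^2)" by (rule mult_left_le_imp_le[OF h])
  have "ln (real n / r) \<le> 7 * real J"
  proof -
    have "real n / r = 16 * (real n / (16 * r))" using r1 by simp
    also have "\<dots> \<le> 16 * 8 ^ J" using m(2) unfolding J_def by simp
    finally have le: "real n / r \<le> 16 * 8 ^ J" .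
    have pos: "real n / r > 0" using r1 n by simp
    have "ln (real n / r) \<le> ln (16 * 8 ^ J)" by (rule ln_mono[OF le pos])
    also have "\<dots> = ln 16 + real J * ln 8" by (simp add: ln_mult ln_realpow)
    also have "ln (16::real) = ln 2 + ln 8" using ln_mult[of "2::real" 8] by simp
    also have "ln 2 + ln 8 + real J * ln 8 \<le> 1 + 3 + real J * 3"
      using ln_2_less_1 ln_8 by (intro add_mono mult_left_mono) auto
    finally show ?thesis using J1 by simp
  qed
  hence "r^2 * ln (real n / r) \<le> r^2 * (7 * real J)" using r1 by (intro mult_left_mono) auto
  also have "\<dots> \<le> 7 * (16 * ?V * (100 * 905^2))" using VJ by (simp add: mult_ac)
  finally show ?thesis unfolding r_def by (simp add: field_simps)
qed


lemma final_c:
  assumes "d \<ge> 1"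
  shows "\<exists>c::real. c > 0 \<and> (\<forall>n x. real n \<ge> 64 \<longrightarrow> x \<in> torus n d \<longrightarrow> x \<noteq> torus_zero \<longrightarrow>
     torus_norm n d x < real n / 64 \<longrightarrow> eta_incr_var n d torus_zero x \<ge> c * psi d (real n) (torus_norm n d x))"
proof -
  consider "d = 1" | "d = 2" | "d = 3" | "d = 4" | "d \<ge> 5" using assms by linarith
  thus ?thesis
  proof cases
    case 1
    show ?thesis
      by (rule exI[of _ "1 / (4 * (80 * 545^2))"]) (use case1[OF 1] 1 in \<open>auto simp: psi_def\<close>)
  next
    case 2
    show ?thesis
      by (rule exI[of _ "1 / (7 * (16 * (100 * 905^2)))"]) (use case2[OF 2] 2 in \<open>auto simp: psi_def\<close>)
  next
    case 3
    show ?thesis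
      by (rule exI[of _ "1 / (36 * (125 * 129600))"]) (use case3[OF 3] 3 in \<open>auto simp: psi_def\<close>)
  next
    case 4
    show ?thesis
      by (rule exI[of _ "1 / (4 * (64 * 81000000))"]) (use case4[OF 4] 4 in \<open>auto simp: psi_def\<close>)
  next
    case 5
    show ?thesis
      by (rule exI[of _ "1 / ((2 * real d)^2 * (5 ^ d * 129600))"]) (use case_ge5[OF 5] 5 in \<open>auto simp: psi_def\<close>)
  qed
qed

theorem proposition8p12:
  fixes d :: nat
  assumes "d \<ge> 1"
  shows "\<exists>\<delta> N c :: real. \<delta> > 0 \<and> N > 0 \<and> c > 0 \<and>
    (\<forall>n::nat. real n \<ge> N \<longrightarrow>
      (\<forall>x\<in>torus n d. x \<noteq> torus_zero \<longrightarrow> torus_norm n d x < \<delta> * real n \<longrightarrow>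
         eta_incr_var n d torus_zero x \<ge> c * psi d (real n) (torus_norm n d x)))"
proof -
  obtain c :: real where c: "c > 0" and H: "\<And>n x. real n \<ge> 64 \<Longrightarrow> x \<in> torus n d \<Longrightarrow> x \<noteq> torus_zero \<Longrightarrow>
     torus_norm n d x < real n / 64 \<Longrightarrow> eta_incr_var n d torus_zero x \<ge> c * psi d (real n) (torus_norm n d x)"
    using final_c[OF assms] by blast
  show ?thesis
    by (rule exI[of _ "1/64"], rule exI[of _ 64], rule exI[of _ c]) (use c H in auto)
qed


end
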